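(* The map $Res_{V/V_0}$ is the unique $R_{\Delta_0}$-linear map $$res:R_\Delta\otimes\wedge^rV\to R_{\Delta_0}\otimes\wedge^{r-1}V_0$$ such that, for every $\omega\in\wedge^rV$: 1. for every $\beta\in\Delta_1$, $res(\beta^{-1}\otimes\omega)=(d\beta)^{-1}\wedge\omega$; 2. $res(S(V)\otimes\omega)=0$; 3. $res(m_\nu\otimes\omega)=0$ for every sequence $\nu\subset\Delta_1$ of length strictly greater than $1$.
   Context: Let $k$ be a field of characteristic zero, $V$ a $k$-vector space of dimension $r$, and $V^*$ its dual. $S(V)$ is identified with polynomial functions on $V^*$. Let $\Delta\subset V$ be a finite set of nonzero vectors spanning $V$, and $R_\Delta=\Delta^{-1}S(V)$ the ring of rational functions on $V^*$ obtained by inverting the elements of $\Delta$. Let $V_0\subset V$ be a hyperplane. Set $\Delta_0=\Delta\cap V_0$ and $\Delta_1=\Delta\setminus\Delta_0$. Let $R_{\Delta_0}=\Delta_0^{-1}S(V_0)$, viewed as a subalgebra of $R_\Delta$ (via $S(V_0)\subset S(V)$), so that $R_\Delta\otimes\wedge^rV$ is an $R_{\Delta_0}$-module. For a finite sequence $\nu=(\alpha_1,\dots,\alpha_L)$ of elements of $\Delta$ (repetitions allowed), set $m_\nu=1/\prod_{j=1}^L\alpha_j$; write $\nu\subset\Delta_1$ if all $\alpha_j\in\Delta_1$. For $\beta\in\Delta_1$ and $\omega\in\wedge^rV$, let $(d\beta)^{-1}\wedge\omega$ denote the unique $\omega_0\in\wedge^{r-1}V_0$ with $\omega=\beta\wedge\omega_0$.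 Residue along $V_0$: choose a nonzero $z_0\in V^*$ vanishing on $V_0$. For $\omega\in\wedge^rV$, let $\omega_0=\iota(z_0)\omega\in\wedge^{r-1}V_0$ be the contraction. Define $$Res_{V/V_0}(\phi\otimes\omega)=\psi\otimes\omega_0,\qquad \psi(z)=-\operatorname{Res}_{t=\infty}\big(\phi(z+tz_0)\,dt\big)\quad (z\in V^* ).$$ Here $\psi$ depends only on the image of $z$ in $V^*/kz_0=V_0^*$, and the definition is independent of the choice of $z_0$. *)

theory Defs
  imports "HOL-Combinatorics.Permutations" "HOL-Computational_Algebra.Polynomial"
begin

(* Conventions.
   k = 'a :: field_char_0.  V = 'n \<Rightarrow> 'a  (r = CARD('n)), and V^* is also modelled
   as 'n \<Rightarrow> 'a, with the perfect pairing  pair v z = \<Sum>i. v i * z i.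
   An element v of V is thus the linear function  z \<mapsto> pair v z  on V^*. *)

definition pair :: "('n::finite \<Rightarrow> 'a::comm_ring_1) \<Rightarrow> ('n \<Rightarrow> 'a) \<Rightarrow> 'a" where
  "pair v z = (\<Sum>i\<in>UNIV. v i * z i)"

(* S(W) for a subspace W of V, as polynomial functions on V^*: the k-algebra of
   functions generated by the linear functions given by elements of W.
   S(V) = polyfun UNIV, S(V_0) = polyfun V0. *)
inductive_set polyfun :: "('n::finite \<Rightarrow> 'a::field) set \<Rightarrow> (('n \<Rightarrow> 'a) \<Rightarrow> 'a) set"
  for W where
  const: "(\<lambda>z. c) \<in> polyfun W"
| lin: "v \<in> W \<Longrightarrow> (\<lambda>z. pair v z) \<in> polyfun W"
| add: "f \<in> polyfun W \<Longrightarrow> g \<in> polyfun W \<Longrightarrow> (\<lambda>z. f z + g z) \<in> polyfun W"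
| mult: "f \<in> polyfun W \<Longrightarrow> g \<in> polyfun W \<Longrightarrow> (\<lambda>z. f z * g z) \<in> polyfun W"

definition off :: "('n::finite \<Rightarrow> 'a::comm_ring_1) set \<Rightarrow> ('n \<Rightarrow> 'a) \<Rightarrow> bool" where
  "off D z \<longleftrightarrow> (\<forall>\<alpha>\<in>D. pair \<alpha> z \<noteq> 0)"

(* D^{-1} S(W), as functions on V^*; a rational function is represented by any total
   function agreeing with it off the hyperplanes of D (values there are irrelevant).
   R_Delta = ratfun UNIV Delta,  R_{Delta_0} = ratfun V0 Delta0. *)
definition ratfun :: "('n::finite \<Rightarrow> 'a::field) set \<Rightarrow> ('n \<Rightarrow> 'a) set \<Rightarrow> (('n \<Rightarrow> 'a) \<Rightarrow> 'a) set" where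
  "ratfun W D = {f. \<exists>P\<in>polyfun W. \<exists>e::('n \<Rightarrow> 'a) \<Rightarrow> nat.
      \<forall>z. off D z \<longrightarrow> f z = P z / (\<Prod>\<alpha>\<in>D. pair \<alpha> z ^ e \<alpha>)}"

(* An element of \<wedge>^m V is represented (canonically) by the alternating
   m-linear form it defines on V^*, i.e. as a function of a tuple  xi :: nat \<Rightarrow> V^*
   (only xi 0, ..., xi (m-1) matter):
     (w_0 \<and> ... \<and> w_{m-1}) (xi) = det (pair (w_j) (xi i))_{i,j<m}. *)
definition wedge_vecs :: "nat \<Rightarrow> (nat \<Rightarrow> 'n::finite \<Rightarrow> 'a::comm_ring_1) \<Rightarrow> (nat \<Rightarrow> 'n \<Rightarrow> 'a) \<Rightarrow> 'a" where
  "wedge_vecs m w xi = (\<Sum>p | p permutes {..<m}. of_int (sign p) * (\<Prod>i<m. pair (w (p i)) (xi i)))"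

(* \<wedge>^m W for a subspace W of dimension m (top degree, so every element is a
   scalar multiple of a wedge of m vectors of W); viewed inside \<wedge>^m V.
   (The scalar is needed only for m = 0, where \<wedge>^0 W = k.) *)
definition top_ext :: "nat \<Rightarrow> ('n::finite \<Rightarrow> 'a::comm_ring_1) set \<Rightarrow> ((nat \<Rightarrow> 'n \<Rightarrow> 'a) \<Rightarrow> 'a) set" where
  "top_ext m W = {(\<lambda>xi. c * wedge_vecs m w xi) | c w. \<forall>i<m. w i \<in> W}"

definition skip :: "nat \<Rightarrow> (nat \<Rightarrow> 'b) \<Rightarrow> nat \<Rightarrow> 'b" where
  "skip i xi = (\<lambda>j. if j < i then xi j else xi (Suc j))"

definition tcons :: "'b \<Rightarrow> (nat \<Rightarrow> 'b) \<Rightarrow> nat \<Rightarrow> 'b" where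
  "tcons x eta = (\<lambda>j. case j of 0 \<Rightarrow> x | Suc j' \<Rightarrow> eta j')"

(* beta \<and> omega0, for omega0 of degree m-1, as a form of degree m *)
definition wedge_left :: "nat \<Rightarrow> ('n::finite \<Rightarrow> 'a::comm_ring_1) \<Rightarrow> ((nat \<Rightarrow> 'n \<Rightarrow> 'a) \<Rightarrow> 'a)
    \<Rightarrow> (nat \<Rightarrow> 'n \<Rightarrow> 'a) \<Rightarrow> 'a" where
  "wedge_left m \<beta> \<omega>0 xi = (\<Sum>i<m. (-1)^i * pair \<beta> (xi i) * \<omega>0 (skip i xi))"

(* (d beta)^{-1} \<and> omega : the unique omega0 \<in> \<wedge>^{r-1} V0 with omega = beta \<and> omega0 *)
definition dinv :: "nat \<Rightarrow> ('n::finite \<Rightarrow> 'a::comm_ring_1) set \<Rightarrow> ('n \<Rightarrow> 'a)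
    \<Rightarrow> ((nat \<Rightarrow> 'n \<Rightarrow> 'a) \<Rightarrow> 'a) \<Rightarrow> ((nat \<Rightarrow> 'n \<Rightarrow> 'a) \<Rightarrow> 'a)" where
  "dinv r V0 \<beta> \<omega> = (THE \<omega>0. \<omega>0 \<in> top_ext (r - 1) V0 \<and> wedge_left r \<beta> \<omega>0 = \<omega>)"

(* - Res_{t=\<infinity>} (f(t) dt) for a one-variable rational function f = p/q (f given up to
   finitely many values): the coefficient of t^{-1} in the expansion of f at infinity,
   which is  coeff (p mod q) (deg q - 1) / lead_coeff q. *)
definition neg_res_inf :: "('a::field \<Rightarrow> 'a) \<Rightarrow> 'a" where
  "neg_res_inf f = (THE c. \<exists>p q. q \<noteq> 0 \<and> finite {t. f t \<noteq> poly p t / poly q t} \<and>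
       c = coeff (p mod q) (degree q - 1) / lead_coeff q)"

(* Tensor products R \<otimes> L, with L one-dimensional (top exterior power): elements
   phi \<otimes> omega represented as  (z, xi) \<mapsto> phi z * omega xi. *)
definition tens :: "(('n \<Rightarrow> 'a) \<Rightarrow> 'a::comm_ring_1) set \<Rightarrow> ((nat \<Rightarrow> 'n \<Rightarrow> 'a) \<Rightarrow> 'a) set
    \<Rightarrow> (('n \<Rightarrow> 'a) \<Rightarrow> (nat \<Rightarrow> 'n \<Rightarrow> 'a) \<Rightarrow> 'a) set" where
  "tens R L = {(\<lambda>z xi. \<phi> z * \<omega> xi) | \<phi> \<omega>. \<phi> \<in> R \<and> \<omega> \<in> L}"

(* equality of elements of (D^{-1}S) \<otimes> L : equality off the hyperplanes of D *)
definition eq_off :: "('n::finite \<Rightarrow> 'a::comm_ring_1) set \<Rightarrow> (('n \<Rightarrow> 'a) \<Rightarrow> (nat \<Rightarrow> 'n \<Rightarrow> 'a) \<Rightarrow> 'a)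
    \<Rightarrow> (('n \<Rightarrow> 'a) \<Rightarrow> (nat \<Rightarrow> 'n \<Rightarrow> 'a) \<Rightarrow> 'a) \<Rightarrow> bool" where
  "eq_off D \<Phi> \<Psi> \<longleftrightarrow> (\<forall>z. off D z \<longrightarrow> (\<forall>xi. \<Phi> z xi = \<Psi> z xi))"

(* Res_{V/V0}(phi \<otimes> omega) = psi \<otimes> iota(z0) omega, psi(z) = -Res_{t=\<infinity>} phi(z + t z0) dt.
   Here Phi(z', tcons z0 eta) = phi(z') * (iota(z0) omega)(eta). *)
definition Res :: "('n::finite \<Rightarrow> 'a::field) \<Rightarrow> (('n \<Rightarrow> 'a) \<Rightarrow> (nat \<Rightarrow> 'n \<Rightarrow> 'a) \<Rightarrow> 'a)
    \<Rightarrow> (('n \<Rightarrow> 'a) \<Rightarrow> (nat \<Rightarrow> 'n \<Rightarrow> 'a) \<Rightarrow> 'a)" where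
  "Res z0 \<Phi> = (\<lambda>z eta. neg_res_inf (\<lambda>t. \<Phi> (\<lambda>i. z i + t * z0 i) (tcons z0 eta)))"

definition R0_linear ::
  "(('n::finite \<Rightarrow> 'a::comm_ring_1) \<Rightarrow> 'a) set
   \<Rightarrow> (('n \<Rightarrow> 'a) \<Rightarrow> (nat \<Rightarrow> 'n \<Rightarrow> 'a) \<Rightarrow> 'a) set \<Rightarrow> ('n \<Rightarrow> 'a) set
   \<Rightarrow> (('n \<Rightarrow> 'a) \<Rightarrow> (nat \<Rightarrow> 'n \<Rightarrow> 'a) \<Rightarrow> 'a) set \<Rightarrow> ('n \<Rightarrow> 'a) set
   \<Rightarrow> ((('n \<Rightarrow> 'a) \<Rightarrow> (nat \<Rightarrow> 'n \<Rightarrow> 'a) \<Rightarrow> 'a) \<Rightarrow> (('n \<Rightarrow> 'a) \<Rightarrow> (nat \<Rightarrow> 'n \<Rightarrow> 'a) \<Rightarrow> 'a))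
   \<Rightarrow> bool" where
  "R0_linear R0 Dom D Cod D0 res \<longleftrightarrow>
     (\<forall>\<Phi>\<in>Dom. \<exists>\<Psi>\<in>Cod. eq_off D0 (res \<Phi>) \<Psi>) \<and>
     (\<forall>\<Phi>\<in>Dom. \<forall>\<Psi>\<in>Dom. eq_off D \<Phi> \<Psi> \<longrightarrow> eq_off D0 (res \<Phi>) (res \<Psi>)) \<and>
     (\<forall>\<Phi>\<in>Dom. \<forall>\<Psi>\<in>Dom.
        eq_off D0 (res (\<lambda>z xi. \<Phi> z xi + \<Psi> z xi)) (\<lambda>z eta. res \<Phi> z eta + res \<Psi> z eta)) \<and>
     (\<forall>\<psi>\<in>R0. \<forall>\<Phi>\<in>Dom.
        eq_off D0 (res (\<lambda>z xi. \<psi> z * \<Phi> z xi)) (\<lambda>z eta. \<psi> z * res \<Phi> z eta))"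

(* properties 1--3 of the theorem; r = dim V, Delta0 = Delta \<inter> V0, Delta1 = Delta - V0 *)
definition res_props :: "nat \<Rightarrow> ('n::finite \<Rightarrow> 'a::field) set \<Rightarrow> ('n \<Rightarrow> 'a) set
   \<Rightarrow> ((('n \<Rightarrow> 'a) \<Rightarrow> (nat \<Rightarrow> 'n \<Rightarrow> 'a) \<Rightarrow> 'a) \<Rightarrow> (('n \<Rightarrow> 'a) \<Rightarrow> (nat \<Rightarrow> 'n \<Rightarrow> 'a) \<Rightarrow> 'a))
   \<Rightarrow> bool" where
  "res_props r \<Delta> V0 res \<longleftrightarrow>
     (\<forall>\<omega>\<in>top_ext r UNIV.
       (\<forall>\<beta>\<in>\<Delta> - V0.
          eq_off (\<Delta> \<inter> V0) (res (\<lambda>z xi. inverse (pair \<beta> z) * \<omega> xi)) (\<lambda>z eta. dinv r V0 \<beta> \<omega> eta)) \<and>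
       (\<forall>P\<in>polyfun UNIV.
          eq_off (\<Delta> \<inter> V0) (res (\<lambda>z xi. P z * \<omega> xi)) (\<lambda>z eta. 0)) \<and>
       (\<forall>\<nu>. set \<nu> \<subseteq> \<Delta> - V0 \<and> length \<nu> > 1 \<longrightarrow>
          eq_off (\<Delta> \<inter> V0) (res (\<lambda>z xi. inverse (\<Prod>\<alpha>\<leftarrow>\<nu>. pair \<alpha> z) * \<omega> xi)) (\<lambda>z eta. 0)))"

end

theory Submission
  imports Defs "Jordan_Normal_Form.Determinant"
begin

definition resv :: "'a::field poly \<Rightarrow> 'a poly \<Rightarrow> 'a" where
  "resv p q = coeff (p mod q) (degree q - 1) / lead_coeff q"

lemma coeff_mult_deg_le:
  fixes b s :: "'a::field poly"
  assumes "degree b \<le> n"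
  shows "coeff (b * s) (n + degree s) = coeff b n * lead_coeff s"
proof (cases "b = 0 \<or> s = 0")
  case True then show ?thesis by auto
next
  case False
  show ?thesis
  proof (cases "degree b = n")
    case True then show ?thesis using coeff_mult_degree_sum[of b s] by simp
  next
    case F: False
    with assms have lt: "degree b < n" by simp
    have "degree (b * s) < n + degree s" using degree_mult_le[of b s] lt by linarith
    then have "coeff (b * s) (n + degree s) = 0" by (simp add: coeff_eq_0)
    moreover have "coeff b n = 0" using lt by (simp add: coeff_eq_0)
    ultimately show ?thesis by simp
  qed
qed

lemma resv_mult:
  fixes p q s :: "'a::field poly"
  assumes q: "q \<noteq> 0" and s: "s \<noteq> 0"
  shows "resv (p * s) (q * s) = resv p q"
proof -
  have m: "(p * s) mod (q * s) = (p mod q) * s" by (rule mod_mult_mult2)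
  have dq: "degree (q * s) = degree q + degree s" using q s by (rule degree_mult_eq)
  have lc: "lead_coeff (q * s) = lead_coeff q * lead_coeff s" by (rule lead_coeff_mult)
  have ls: "lead_coeff s \<noteq> 0" using s by simp
  show ?thesis
  proof (cases "degree q = 0")
    case True
    then have "p mod q = 0" using degree_mod_less[OF q, of p] by auto
    then show ?thesis unfolding resv_def using m by simp
  next
    case False
    have db: "degree (p mod q) \<le> degree q - 1"
      using degree_mod_less[OF q, of p] False by auto
    have "degree (q * s) - 1 = (degree q - 1) + degree s" using dq False by simp
    then have "coeff ((p * s) mod (q * s)) (degree (q * s) - 1) = coeff (p mod q) (degree q - 1) * lead_coeff s"
      using m coeff_mult_deg_le[OF db, of s] by (simp only:)
    then show ?thesis unfolding resv_def lc using ls by simp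
  qed
qed

definition israt :: "('a::field \<Rightarrow> 'a) \<Rightarrow> bool" where
  "israt f \<longleftrightarrow> (\<exists>p q. q \<noteq> 0 \<and> finite {t. f t \<noteq> poly p t / poly q t})"

lemma poly_eq_from_cofinite:
  fixes p :: "'a::{field_char_0} poly"
  assumes "finite {t. poly p t \<noteq> 0}"
  shows "p = 0"
proof (rule ccontr)
  assume "p \<noteq> 0"
  then have "finite {t. poly p t = 0}" by (rule poly_roots_finite)
  with assms have "finite ({t. poly p t = 0} \<union> {t. poly p t \<noteq> 0})" by simp
  moreover have "{t. poly p t = 0} \<union> {t. poly p t \<noteq> 0} = (UNIV :: 'a set)" by auto
  ultimately have "finite (UNIV :: 'a set)" by simp
  with infinite_UNIV_char_0 show False by blast
qed

lemma resv_unique: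
  fixes p q p' q' :: "'a::field_char_0 poly"
  assumes q: "q \<noteq> 0" and q': "q' \<noteq> 0"
    and f1: "finite {t. f t \<noteq> poly p t / poly q t}"
    and f2: "finite {t. f t \<noteq> poly p' t / poly q' t}"
  shows "resv p q = resv p' q'"
proof -
  have "finite {t. poly (p * q' - p' * q) t \<noteq> 0}"
  proof (rule finite_subset)
    show "{t. poly (p * q' - p' * q) t \<noteq> 0} \<subseteq>
      {t. f t \<noteq> poly p t / poly q t} \<union> {t. f t \<noteq> poly p' t / poly q' t} \<union> {t. poly q t = 0} \<union> {t. poly q' t = 0}"
    proof
      fix t assume "t \<in> {t. poly (p * q' - p' * q) t \<noteq> 0}"
      then have ne: "poly p t * poly q' t \<noteq> poly p' t * poly q t" by simp
      show "t \<in> {t. f t \<noteq> poly p t / poly q t} \<union> {t. f t \<noteq> poly p' t / poly q' t} \<union> {t. poly q t = 0} \<union> {t. poly q' t = 0}"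
      proof (rule ccontr)
        assume "\<not> ?thesis"
        then have "poly p t / poly q t = poly p' t / poly q' t" "poly q t \<noteq> 0" "poly q' t \<noteq> 0" by auto
        then have "poly p t * poly q' t = poly p' t * poly q t" by (simp add: field_simps)
        with ne show False by simp
      qed
    qed
    show "finite ({t. f t \<noteq> poly p t / poly q t} \<union> {t. f t \<noteq> poly p' t / poly q' t} \<union> {t. poly q t = 0} \<union> {t. poly q' t = 0})"
      using f1 f2 poly_roots_finite[OF q] poly_roots_finite[OF q'] by simp
  qed
  then have "p * q' - p' * q = 0" by (rule poly_eq_from_cofinite)
  then have e: "p * q' = p' * q" by simp
  have "resv p q = resv (p * q') (q * q')" using resv_mult[OF q q'] by simp
  also have "\<dots> = resv (p' * q) (q' * q)" using e by (simp add: mult.commute)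
  also have "\<dots> = resv p' q'" using resv_mult[OF q' q] by simp
  finally show ?thesis .
qed

lemma nri_eq:
  fixes f :: "'a::field_char_0 \<Rightarrow> 'a"
  assumes q: "q \<noteq> 0" and f: "finite {t. f t \<noteq> poly p t / poly q t}"
  shows "neg_res_inf f = resv p q"
  unfolding neg_res_inf_def
proof (rule the_equality)
  show "\<exists>p' q'. q' \<noteq> 0 \<and> finite {t. f t \<noteq> poly p' t / poly q' t} \<and> resv p q = coeff (p' mod q') (degree q' - 1) / lead_coeff q'"
    using q f unfolding resv_def by blast
  fix c assume "\<exists>p' q'. q' \<noteq> 0 \<and> finite {t. f t \<noteq> poly p' t / poly q' t} \<and> c = coeff (p' mod q') (degree q' - 1) / lead_coeff q'"
  then obtain p' q' where "q' \<noteq> 0" "finite {t. f t \<noteq> poly p' t / poly q' t}" "c = resv p' q'"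
    unfolding resv_def by blast
  then show "c = resv p q" using resv_unique[OF q _ f] by metis
qed

lemma nri_cong:
  assumes "finite {t. f t \<noteq> g t}"
  shows "neg_res_inf f = neg_res_inf g"
proof -
  have "\<And>h. finite {t. f t \<noteq> h t} \<longleftrightarrow> finite {t. g t \<noteq> h t}"
  proof
    fix h
    assume "finite {t. f t \<noteq> h t}"
    then show "finite {t. g t \<noteq> h t}"
      by (rule finite_subset[rotated, OF finite_UnI[OF assms]]) auto
  next
    fix h
    assume "finite {t. g t \<noteq> h t}"
    then show "finite {t. f t \<noteq> h t}"
      by (rule finite_subset[rotated, OF finite_UnI[OF assms]]) auto
  qed
  then show ?thesis unfolding neg_res_inf_def by simp
qed

lemma israt_cong:
  assumes "finite {t. f t \<noteq> g t}" "israt f"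
  shows "israt g"
proof -
  obtain p q where "q \<noteq> 0" "finite {t. f t \<noteq> poly p t / poly q t}" using assms(2) unfolding israt_def by blast
  moreover have "{t. g t \<noteq> poly p t / poly q t} \<subseteq> {t. f t \<noteq> g t} \<union> {t. f t \<noteq> poly p t / poly q t}" by auto
  ultimately show ?thesis unfolding israt_def using assms(1) by (meson finite_UnI finite_subset)
qed

lemma nri_add:
  fixes f g :: "'a::field_char_0 \<Rightarrow> 'a"
  assumes "israt f" "israt g"
  shows "neg_res_inf (\<lambda>t. f t + g t) = neg_res_inf f + neg_res_inf g"
    and "israt (\<lambda>t. f t + g t)"
proof -
  obtain p q where q: "q \<noteq> 0" and fq: "finite {t. f t \<noteq> poly p t / poly q t}" using assms(1) unfolding israt_def by blast
  obtain p' q' where q': "q' \<noteq> 0" and fq': "finite {t. g t \<noteq> poly p' t / poly q' t}" using assms(2) unfolding israt_def by blast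
  have qq: "q * q' \<noteq> 0" using q q' by simp
  have fin: "finite {t. f t + g t \<noteq> poly (p * q' + p' * q) t / poly (q * q') t}"
  proof (rule finite_subset)
    show "{t. f t + g t \<noteq> poly (p * q' + p' * q) t / poly (q * q') t} \<subseteq>
       {t. f t \<noteq> poly p t / poly q t} \<union> {t. g t \<noteq> poly p' t / poly q' t} \<union> {t. poly q t = 0} \<union> {t. poly q' t = 0}"
      by (auto simp: field_simps)
    show "finite ({t. f t \<noteq> poly p t / poly q t} \<union> {t. g t \<noteq> poly p' t / poly q' t} \<union> {t. poly q t = 0} \<union> {t. poly q' t = 0})"
      using fq fq' poly_roots_finite[OF q] poly_roots_finite[OF q'] by simp
  qed
  then show "israt (\<lambda>t. f t + g t)" unfolding israt_def using qq by blast
  have "resv (p * q' + p' * q) (q * q') = resv (p * q') (q * q') + resv (p' * q) (q' * q)"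
    unfolding resv_def by (simp add: poly_mod_add_left add_divide_distrib mult.commute)
  also have "\<dots> = resv p q + resv p' q'" using resv_mult[OF q q'] resv_mult[OF q' q] by simp
  finally show "neg_res_inf (\<lambda>t. f t + g t) = neg_res_inf f + neg_res_inf g"
    using nri_eq[OF qq fin] nri_eq[OF q fq] nri_eq[OF q' fq'] by simp
qed

lemma nri_smult:
  fixes f :: "'a::field_char_0 \<Rightarrow> 'a"
  assumes "israt f"
  shows "neg_res_inf (\<lambda>t. c * f t) = c * neg_res_inf f"
    and "israt (\<lambda>t. c * f t)"
proof -
  obtain p q where q: "q \<noteq> 0" and fq: "finite {t. f t \<noteq> poly p t / poly q t}" using assms(1) unfolding israt_def by blast
  have fin: "finite {t. c * f t \<noteq> poly (Polynomial.smult c p) t / poly q t}"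
    by (rule finite_subset[OF _ fq]) auto
  then show "israt (\<lambda>t. c * f t)" unfolding israt_def using q by blast
  show "neg_res_inf (\<lambda>t. c * f t) = c * neg_res_inf f"
    using nri_eq[OF q fin] nri_eq[OF q fq] unfolding resv_def by (simp add: mod_smult_left)
qed

lemma nri_poly:
  fixes p :: "'a::field_char_0 poly"
  shows "neg_res_inf (\<lambda>t. poly p t) = 0"
proof -
  have "neg_res_inf (\<lambda>t. poly p t) = resv p 1" by (rule nri_eq) auto
  then show ?thesis unfolding resv_def by simp
qed

lemma israt_poly: "israt (\<lambda>t. poly p t)"
  unfolding israt_def by (rule exI[of _ p], rule exI[of _ 1]) simp

lemma nri_lin:
  fixes a b :: "'a::field_char_0"
  assumes b: "b \<noteq> 0"
  shows "neg_res_inf (\<lambda>t. inverse (a + t * b)) = 1 / b"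
proof -
  have q: "[:a, b:] \<noteq> 0" using b by simp
  have "neg_res_inf (\<lambda>t. inverse (a + t * b)) = resv 1 [:a, b:]"
    by (rule nri_eq[OF q]) (simp add: field_simps inverse_eq_divide)
  also have "\<dots> = 1 / b" unfolding resv_def using b by (simp add: mod_poly_less)
  finally show ?thesis .
qed

lemma prodlist_lin:
  fixes A B :: "'b \<Rightarrow> 'a::field"
  assumes "\<forall>x\<in>set xs. B x \<noteq> 0"
  shows "prod_list (map (\<lambda>x. [:A x, B x:]) xs) \<noteq> 0 \<and> degree (prod_list (map (\<lambda>x. [:A x, B x:]) xs)) = length xs
    \<and> (\<forall>t. poly (prod_list (map (\<lambda>x. [:A x, B x:]) xs)) t = (\<Prod>x\<leftarrow>xs. A x + t * B x))"
  using assms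
proof (induction xs)
  case Nil then show ?case by simp
next
  case (Cons y ys)
  then have y: "[:A y, B y:] \<noteq> 0" and dy: "degree [:A y, B y:] = 1" by auto
  have e: "prod_list (map (\<lambda>x. [:A x, B x:]) (y # ys)) = [:A y, B y:] * prod_list (map (\<lambda>x. [:A x, B x:]) ys)"
    by simp
  from Cons have ih: "prod_list (map (\<lambda>x. [:A x, B x:]) ys) \<noteq> 0 \<and> degree (prod_list (map (\<lambda>x. [:A x, B x:]) ys)) = length ys
    \<and> (\<forall>t. poly (prod_list (map (\<lambda>x. [:A x, B x:]) ys)) t = (\<Prod>x\<leftarrow>ys. A x + t * B x))" by simp
  let ?P = "prod_list (map (\<lambda>x. [:A x, B x:]) ys)"
  have nz: "[:A y, B y:] * ?P \<noteq> 0" using y ih by (simp only: mult_eq_0_iff) simp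
  have dg: "degree ([:A y, B y:] * ?P) = Suc (length ys)"
    using degree_mult_eq[OF y, of ?P] ih dy by simp
  have pv: "\<forall>t. poly ([:A y, B y:] * ?P) t = (\<Prod>x\<leftarrow>y # ys. A x + t * B x)"
    using ih by (simp add: algebra_simps)
  show ?case unfolding e using nz dg pv by simp
qed

lemma nri_prod:
  fixes A B :: "'b \<Rightarrow> 'a::field_char_0"
  assumes B: "\<forall>x\<in>set xs. B x \<noteq> 0" and len: "length xs > 1"
  shows "neg_res_inf (\<lambda>t. inverse (\<Prod>x\<leftarrow>xs. A x + t * B x)) = 0"
proof -
  let ?q = "prod_list (map (\<lambda>x. [:A x, B x:]) xs)"
  note pl = prodlist_lin[OF B, of A]
  have e1: "neg_res_inf (\<lambda>t. inverse (\<Prod>x\<leftarrow>xs. A x + t * B x)) = resv 1 ?q"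
    by (rule nri_eq) (use pl in \<open>auto simp: inverse_eq_divide\<close>)
  have "degree (1::'a poly) < degree ?q" using pl len by (cases xs) auto
  then have "1 mod ?q = 1" by (rule mod_poly_less)
  then have "resv 1 ?q = 0" unfolding resv_def using pl len by (cases xs) auto
  then show ?thesis using e1 by simp
qed

lemma wedge_det:
  "wedge_vecs m w xi = det (mat m m (\<lambda>(i,j). pair (w j) (xi i)))"
proof -
  have "det (mat m m (\<lambda>(i,j). pair (w j) (xi i))) =
     (\<Sum>p | p permutes {0..<m}. of_int (sign p) * (\<Prod>i = 0..<m. (mat m m (\<lambda>(i,j). pair (w j) (xi i))) $$ (i, p i)))"
    by (rule det_def') simp
  also have "\<dots> = (\<Sum>p | p permutes {..<m}. of_int (sign p) * (\<Prod>i<m. pair (w (p i)) (xi i)))"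
  proof (rule sum.cong)
    show "{p. p permutes {0..<m}} = {p. p permutes {..<m}}" by (simp add: atLeast0LessThan)
  next
    fix p assume "p \<in> {p. p permutes {..<m}}"
    then have pp: "p permutes {..<m}" by simp
    have "\<And>i. i < m \<Longrightarrow> p i < m" using pp permutes_in_image by fastforce
    then show "of_int (sign p) * (\<Prod>i = 0..<m. (mat m m (\<lambda>(i,j). pair (w j) (xi i))) $$ (i, p i)) =
        of_int (sign p) * (\<Prod>i<m. pair (w (p i)) (xi i))"
      by (auto simp: atLeast0LessThan intro!: prod.cong)
  qed
  finally show ?thesis unfolding wedge_vecs_def by simp
qed

lemma skip_tcons0[simp]: "skip 0 (tcons x eta) = eta"
  by (simp add: skip_def tcons_def)

lemma skip_tcons_Suc[simp]: "skip (Suc i) (tcons x eta) = tcons x (skip i eta)"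
  by (rule ext) (simp add: skip_def tcons_def split: nat.split)

lemma tcons0[simp]: "tcons x eta 0 = x" and tconsSuc[simp]: "tcons x eta (Suc j) = eta j"
  by (simp_all add: tcons_def)

lemma pair_sum_bij:
  fixes g :: "nat \<Rightarrow> 'n::finite"
  assumes g: "bij_betw g {0..<card (UNIV :: 'n set)} UNIV"
  shows "(\<Sum>l<card (UNIV :: 'n set). f (g l)) = (\<Sum>n\<in>UNIV. (f n :: 'a::comm_ring_1))"
  using sum.reindex_bij_betw[OF g, of f] by (simp add: atLeast0LessThan)

lemma det_dependent_zero:
  fixes y :: "nat \<Rightarrow> 'n::finite \<Rightarrow> 'a::comm_ring_1" and u :: "nat \<Rightarrow> 'n \<Rightarrow> 'a"
  shows "det (mat (Suc (card (UNIV :: 'n set))) (Suc (card (UNIV :: 'n set))) (\<lambda>(i,j). pair (u j) (y i))) = 0"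
proof -
  let ?r = "card (UNIV :: 'n set)"
  obtain g where g: "bij_betw g {0..<?r} (UNIV :: 'n set)"
    using ex_bij_betw_nat_finite[of "UNIV :: 'n set"] by auto
  define Y where "Y = mat (Suc ?r) (Suc ?r) (\<lambda>(i,l). if l < ?r then y i (g l) else 0)"
  define U where "U = mat (Suc ?r) (Suc ?r) (\<lambda>(l,j). if l < ?r then u j (g l) else 0)"
  have Yc: "Y \<in> carrier_mat (Suc ?r) (Suc ?r)" and Uc: "U \<in> carrier_mat (Suc ?r) (Suc ?r)"
    unfolding Y_def U_def by auto
  have "Y * U = mat (Suc ?r) (Suc ?r) (\<lambda>(i,j). pair (u j) (y i))"
  proof (rule eq_matI)
    fix i j assume i: "i < dim_row (mat (Suc ?r) (Suc ?r) (\<lambda>(i,j). pair (u j) (y i)))"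
      and j: "j < dim_col (mat (Suc ?r) (Suc ?r) (\<lambda>(i,j). pair (u j) (y i)))"
    then have i': "i < Suc ?r" and j': "j < Suc ?r" by auto
    have "(Y * U) $$ (i, j) = (\<Sum>l\<in>{0..<Suc ?r}. Y $$ (i, l) * U $$ (l, j))"
      using i' j' Yc Uc by (simp add: scalar_prod_def Y_def U_def)
    also have "\<dots> = (\<Sum>l<?r. y i (g l) * u j (g l))"
      using i' j' by (simp add: Y_def U_def atLeast0LessThan lessThan_Suc)
    also have "\<dots> = (\<Sum>n\<in>UNIV. y i n * u j n)"
      by (rule pair_sum_bij[OF g, of "\<lambda>n. y i n * u j n"])
    also have "\<dots> = pair (u j) (y i)" unfolding pair_def by (simp add: mult.commute)
    finally show "(Y * U) $$ (i, j) = mat (Suc ?r) (Suc ?r) (\<lambda>(i,j). pair (u j) (y i)) $$ (i, j)"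
      using i' j' by simp
  qed (use Yc Uc in auto)
  moreover have "det Y = 0"
  proof -
    have "det Y = (\<Sum>i<Suc ?r. Y $$ (i, ?r) * cofactor Y i ?r)"
      by (rule laplace_expansion_column[OF Yc]) simp
    also have "\<dots> = 0" by (simp add: Y_def)
    finally show ?thesis .
  qed
  ultimately show ?thesis using det_mult[OF Yc Uc] by simp
qed

lemma laplace_identity:
  fixes y :: "nat \<Rightarrow> 'n::finite \<Rightarrow> 'a::comm_ring_1"
  shows "(\<Sum>k<Suc (card (UNIV :: 'n set)). (-1)^k * pair \<beta> (y k) * wedge_vecs (card (UNIV :: 'n set)) w (skip k y)) = 0"
proof -
  let ?r = "card (UNIV :: 'n set)"
  let ?M = "mat (Suc ?r) (Suc ?r) (\<lambda>(i,j). pair (tcons \<beta> w j) (y i))"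
  have Mc: "?M \<in> carrier_mat (Suc ?r) (Suc ?r)" by auto
  have "det ?M = (\<Sum>i<Suc ?r. ?M $$ (i, 0) * cofactor ?M i 0)"
    by (rule laplace_expansion_column[OF Mc]) simp
  also have "\<dots> = (\<Sum>k<Suc ?r. (-1)^k * pair \<beta> (y k) * wedge_vecs ?r w (skip k y))"
  proof (rule sum.cong[OF refl])
    fix k assume k: "k \<in> {..<Suc ?r}"
    have "mat_delete ?M k 0 = mat ?r ?r (\<lambda>(i,j). pair (w j) (skip k y i))"
      by (rule eq_matI) (use k in \<open>auto simp: mat_delete_def skip_def\<close>)
    then show "?M $$ (k, 0) * cofactor ?M k 0 = (-1)^k * pair \<beta> (y k) * wedge_vecs ?r w (skip k y)"
      using k by (simp add: cofactor_def wedge_det)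
  qed
  finally show ?thesis using det_dependent_zero[of "tcons \<beta> w" y] by simp
qed


lemma pair_diff: "pair (\<lambda>i. a i - c * b i) z = pair a z - c * pair b z"
  unfolding pair_def by (simp add: algebra_simps sum_subtractf sum_distrib_left)

lemma pair_line: "pair v (\<lambda>i. z i + t * z0 i) = pair v z + t * pair v z0"
  unfolding pair_def by (simp add: algebra_simps sum.distrib sum_distrib_left)

lemma pair_smult_left: "pair (\<lambda>i. c * a i) z = c * pair a z"
  unfolding pair_def by (simp add: algebra_simps sum_distrib_left)

lemma wedge_zero_row:
  assumes m: "m \<ge> 1" and z: "\<forall>j<m. pair (w j) (xi 0) = 0"
  shows "wedge_vecs m w xi = 0"
  unfolding wedge_vecs_def
proof (rule sum.neutral, rule ballI)
  fix p assume "p \<in> {p. p permutes {..<m}}"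
  then have "p 0 < m" using m permutes_in_image by fastforce
  then have "pair (w (p 0)) (xi 0) = 0" using z by simp
  then have "(\<Prod>i<m. pair (w (p i)) (xi i)) = 0"
    using m by (intro prod_zero) auto
  then show "of_int (sign p) * (\<Prod>i<m. pair (w (p i)) (xi i)) = 0" by simp
qed

lemma colops_det:
  fixes w :: "nat \<Rightarrow> 'n::finite \<Rightarrow> 'a::field"
  assumes k: "k < m" and S: "S \<subseteq> {..<m}"
  shows "det (mat m m (\<lambda>(i,j). pair ((\<lambda>j. if j \<in> S \<and> j \<noteq> k then (\<lambda>i. w j i - c j * w k i) else w j) j) (xi i)))
     = det (mat m m (\<lambda>(i,j). pair (w j) (xi i)))"
proof -
  have "finite S" using S finite_subset by blast
  then show ?thesis using S
  proof (induction S rule: finite_induct)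
    case empty then show ?case by simp
  next
    case (insert j S)
    let ?vS = "\<lambda>l. if l \<in> S \<and> l \<noteq> k then (\<lambda>i. w l i - c l * w k i) else w l"
    let ?vI = "\<lambda>l. if l \<in> insert j S \<and> l \<noteq> k then (\<lambda>i. w l i - c l * w k i) else w l"
    have jm: "j < m" using insert by auto
    show ?case
    proof (cases "j = k")
      case True
      then have e: "?vI = ?vS" by auto
      have "mat m m (\<lambda>(i,l). pair (?vI l) (xi i)) = mat m m (\<lambda>(i,l). pair (?vS l) (xi i))"
        using True by (intro eq_matI) auto
      then have "det (mat m m (\<lambda>(i,l). pair (?vI l) (xi i))) = det (mat m m (\<lambda>(i,l). pair (?vS l) (xi i)))"
        by (simp only:)
      moreover have "S \<subseteq> {..<m}" using insert by simp
      ultimately show ?thesis using insert.IH by (rule_tac trans) auto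
    next
      case False
      have "mat m m (\<lambda>(i,l). pair (?vI l) (xi i)) = addcol (- c j) j k (mat m m (\<lambda>(i,l). pair (?vS l) (xi i)))"
        by (rule eq_matI) (use insert False k in \<open>auto simp: mat_addcol_def pair_diff\<close>)
      moreover have "det (addcol (- c j) j k (mat m m (\<lambda>(i,l). pair (?vS l) (xi i)))) = det (mat m m (\<lambda>(i,l). pair (?vS l) (xi i)))"
        by (rule det_addcol[OF k]) (use False in auto)
      ultimately show ?thesis using insert by simp
    qed
  qed
qed

lemma iota_top:
  fixes w :: "nat \<Rightarrow> 'n::finite \<Rightarrow> 'a::field"
  assumes m: "m \<ge> 1"
  shows "(\<lambda>eta. wedge_vecs m w (tcons z0 eta)) \<in> top_ext (m - 1) {v. pair v z0 = 0}"
proof (cases "\<forall>j<m. pair (w j) z0 = 0")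
  case True
  have "wedge_vecs m w (tcons z0 eta) = 0" for eta
    by (rule wedge_zero_row[OF m]) (use True in simp)
  then have "(\<lambda>eta. wedge_vecs m w (tcons z0 eta)) = (\<lambda>eta. 0 * wedge_vecs (m - 1) (\<lambda>_ _. 0) eta)"
    by auto
  moreover have "\<forall>i<m - 1. (\<lambda>_. 0) \<in> {v. pair v z0 = (0::'a)}" by (simp add: pair_def)
  ultimately show ?thesis unfolding top_ext_def by blast
next
  case False
  then obtain k where k: "k < m" and ak: "pair (w k) z0 \<noteq> 0" by auto
  define c where "c = (\<lambda>j. pair (w j) z0 / pair (w k) z0)"
  define v where "v = (\<lambda>j. if j \<in> {..<m} \<and> j \<noteq> k then (\<lambda>i. w j i - c j * w k i) else w j)"
  define v' where "v' = (\<lambda>j'. v (if j' < k then j' else Suc j'))"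
  have vz: "pair (v j) z0 = 0" if "j < m" "j \<noteq> k" for j
  proof -
    have "pair (v j) z0 = pair (w j) z0 - c j * pair (w k) z0"
      using that pair_diff[of "w j" "c j" "w k" z0] unfolding v_def by auto
    then show ?thesis using ak unfolding c_def by simp
  qed
  have vk: "v k = w k" unfolding v_def by simp
  have v'V: "\<forall>i<m - 1. v' i \<in> {v. pair v z0 = 0}"
    unfolding v'_def using vz by auto
  have main: "wedge_vecs m w (tcons z0 eta) = (pair (w k) z0 * (-1)^k) * wedge_vecs (m - 1) v' eta" for eta
  proof -
    let ?N = "mat m m (\<lambda>(i,j). pair (v j) (tcons z0 eta i))"
    have Nc: "?N \<in> carrier_mat m m" by simp
    have "wedge_vecs m w (tcons z0 eta) = det ?N"
      unfolding wedge_det v_def by (rule colops_det[OF k, symmetric]) simp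
    also have "\<dots> = (\<Sum>j<m. ?N $$ (0, j) * cofactor ?N 0 j)"
      by (rule laplace_expansion_row[OF Nc]) (use k in simp)
    also have "\<dots> = (\<Sum>j<m. if j = k then pair (w k) z0 * cofactor ?N 0 k else 0)"
      by (rule sum.cong[OF refl]) (use vz vk k in auto)
    also have "\<dots> = pair (w k) z0 * cofactor ?N 0 k" using k by simp
    also have "mat_delete ?N 0 k = mat (m - 1) (m - 1) (\<lambda>(i,j). pair (v' j) (eta i))"
      by (rule eq_matI) (auto simp: mat_delete_def v'_def)
    then have "cofactor ?N 0 k = (-1)^k * wedge_vecs (m - 1) v' eta"
      by (simp add: cofactor_def wedge_det)
    finally show ?thesis by simp
  qed
  have "(\<lambda>eta. wedge_vecs m w (tcons z0 eta)) = (\<lambda>eta. (pair (w k) z0 * (-1)^k) * wedge_vecs (m - 1) v' eta)"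
    using main by auto
  then show ?thesis unfolding top_ext_def using v'V by blast
qed


lemma card_pos: "card (UNIV :: 'n::finite set) \<ge> 1"
  using finite_UNIV_card_ge_0[where 'a='n] by simp

lemma top_ext_scale:
  assumes "f \<in> top_ext m W"
  shows "(\<lambda>eta. a * f eta) \<in> top_ext m W"
proof -
  obtain c w where f: "f = (\<lambda>xi. c * wedge_vecs m w xi)" and w: "\<forall>i<m. w i \<in> W"
    using assms unfolding top_ext_def by blast
  have "(\<lambda>eta. a * f eta) = (\<lambda>xi. (a * c) * wedge_vecs m w xi)" unfolding f by (simp add: mult.assoc)
  then show ?thesis unfolding top_ext_def using w by blast
qed

lemma iota_top_ext:
  fixes \<omega> :: "(nat \<Rightarrow> 'n::finite \<Rightarrow> 'a::field) \<Rightarrow> 'a"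
  assumes \<omega>: "\<omega> \<in> top_ext (card (UNIV::'n set)) UNIV"
  shows "(\<lambda>eta. \<omega> (tcons z0 eta)) \<in> top_ext (card (UNIV::'n set) - 1) {v. pair v z0 = 0}"
proof -
  obtain c w where o: "\<omega> = (\<lambda>xi. c * wedge_vecs (card (UNIV::'n set)) w xi)"
    using \<omega> unfolding top_ext_def by blast
  show ?thesis unfolding o using top_ext_scale[OF iota_top[OF card_pos, of w z0], of c] by simp
qed

lemma dinv_eq:
  fixes \<omega> :: "(nat \<Rightarrow> 'n::finite \<Rightarrow> 'a::field) \<Rightarrow> 'a" and \<beta> z0 :: "'n \<Rightarrow> 'a"
  assumes \<omega>: "\<omega> \<in> top_ext (card (UNIV::'n set)) UNIV" and b: "pair \<beta> z0 \<noteq> 0"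
    and V0: "V0 = {v. pair v z0 = 0}"
  shows "dinv (card (UNIV::'n set)) V0 \<beta> \<omega> = (\<lambda>eta. \<omega> (tcons z0 eta) / pair \<beta> z0)"
proof -
  let ?r = "card (UNIV::'n set)"
  obtain c w where o: "\<omega> = (\<lambda>xi. c * wedge_vecs ?r w xi)"
    using \<omega> unfolding top_ext_def by blast
  obtain r' where r': "?r = Suc r'" using card_pos[where 'n='n] by (cases ?r) auto
  define \<omega>0 where "\<omega>0 = (\<lambda>eta. \<omega> (tcons z0 eta) / pair \<beta> z0)"
  have t0: "\<omega>0 \<in> top_ext (?r - 1) V0"
    unfolding \<omega>0_def V0 using top_ext_scale[OF iota_top_ext[OF \<omega>, of z0], of "1 / pair \<beta> z0"]
    by simp
  have wl: "wedge_left ?r \<beta> \<omega>0 = \<omega>"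
  proof (rule ext)
    fix xi
    let ?W = "wedge_vecs ?r w"
    let ?S = "\<Sum>i<?r. (-1)^i * pair \<beta> (xi i) * ?W (tcons z0 (skip i xi))"
    have li: "(\<Sum>k<Suc ?r. (-1)^k * pair \<beta> (tcons z0 xi k) * ?W (skip k (tcons z0 xi))) = 0"
      by (rule laplace_identity)
    have "(\<Sum>k<Suc ?r. (-1)^k * pair \<beta> (tcons z0 xi k) * ?W (skip k (tcons z0 xi)))
       = pair \<beta> z0 * ?W xi + (\<Sum>i<?r. (-1)^(Suc i) * pair \<beta> (xi i) * ?W (tcons z0 (skip i xi)))"
      by (subst sum.lessThan_Suc_shift) simp
    also have "(\<Sum>i<?r. (-1)^(Suc i) * pair \<beta> (xi i) * ?W (tcons z0 (skip i xi)))
        = (\<Sum>i<?r. - ((-1)^i * pair \<beta> (xi i) * ?W (tcons z0 (skip i xi))))"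
      by (rule sum.cong[OF refl]) simp
    also have "\<dots> = - ?S" by (rule sum_negf)
    finally have e: "pair \<beta> z0 * ?W xi = ?S" using li by simp
    have "wedge_left ?r \<beta> \<omega>0 xi = (\<Sum>i<?r. (c / pair \<beta> z0) * ((-1)^i * pair \<beta> (xi i) * ?W (tcons z0 (skip i xi))))"
      unfolding wedge_left_def \<omega>0_def o by (rule sum.cong[OF refl]) simp
    also have "\<dots> = (c / pair \<beta> z0) * ?S" by (simp add: sum_distrib_left)
    also have "\<dots> = c * ?W xi" using e b by (simp add: field_simps)
    finally show "wedge_left ?r \<beta> \<omega>0 xi = \<omega> xi" unfolding o by simp
  qed
  have uniq: "\<omega>0' = \<omega>0" if t: "\<omega>0' \<in> top_ext (?r - 1) V0" and w': "wedge_left ?r \<beta> \<omega>0' = \<omega>" for \<omega>0'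
  proof (rule ext)
    fix eta
    obtain c' v where o': "\<omega>0' = (\<lambda>xi. c' * wedge_vecs (?r - 1) v xi)" and v: "\<forall>i<?r - 1. v i \<in> V0"
      using t unfolding top_ext_def by blast
    have z: "\<omega>0' (tcons z0 (skip i eta)) = 0" if i: "i < r'" for i
    proof -
      have "wedge_vecs (?r - 1) v (tcons z0 (skip i eta)) = 0"
        by (rule wedge_zero_row) (use i r' v V0 in auto)
      then show ?thesis unfolding o' by simp
    qed
    have "\<omega> (tcons z0 eta) = wedge_left ?r \<beta> \<omega>0' (tcons z0 eta)" using w' by simp
    also have "\<dots> = (\<Sum>i<Suc r'. (-1)^i * pair \<beta> (tcons z0 eta i) * \<omega>0' (skip i (tcons z0 eta)))"
      unfolding wedge_left_def r' ..
    also have "\<dots> = pair \<beta> z0 * \<omega>0' eta"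
      by (subst sum.lessThan_Suc_shift) (simp add: z)
    finally show "\<omega>0' eta = \<omega>0 eta" unfolding \<omega>0_def using b by (simp add: field_simps)
  qed
  have "dinv ?r V0 \<beta> \<omega> = \<omega>0"
    unfolding dinv_def
  proof (rule the_equality)
    show "\<omega>0 \<in> top_ext (?r - 1) V0 \<and> wedge_left ?r \<beta> \<omega>0 = \<omega>" using t0 wl by blast
    fix x assume "x \<in> top_ext (?r - 1) V0 \<and> wedge_left ?r \<beta> x = \<omega>"
    then show "x = \<omega>0" using uniq by blast
  qed
  then show ?thesis unfolding \<omega>0_def .
qed

lemma polyfun_mono: "f \<in> polyfun W \<Longrightarrow> W \<subseteq> W' \<Longrightarrow> f \<in> polyfun W'"
  by (induction f rule: polyfun.induct) (auto intro: polyfun.intros)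

lemma polyfun_power: "f \<in> polyfun W \<Longrightarrow> (\<lambda>z. f z ^ n) \<in> polyfun W"
proof (induction n)
  case 0 then show ?case by (simp add: polyfun.const)
next
  case (Suc n)
  then show ?case using polyfun.mult[OF Suc.prems Suc.IH] by simp
qed

lemma polyfun_prod:
  assumes "finite S" "\<forall>x\<in>S. f x \<in> polyfun W"
  shows "(\<lambda>z. \<Prod>x\<in>S. f x z) \<in> polyfun W"
  using assms
proof (induction S rule: finite_induct)
  case empty then show ?case by (simp add: polyfun.const)
next
  case (insert x S)
  then show ?case using polyfun.mult[of "f x" W "\<lambda>z. \<Prod>x\<in>S. f x z"] by simp
qed

lemma polyfun_prod_pow:
  assumes "finite D" "D \<subseteq> W"
  shows "(\<lambda>z. \<Prod>\<alpha>\<in>D. pair \<alpha> z ^ e \<alpha>) \<in> polyfun W"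
  using polyfun_prod[OF assms(1), of "\<lambda>\<alpha> z. pair \<alpha> z ^ e \<alpha>" W] polyfun_power[OF polyfun.lin] assms(2)
  by blast

lemma polyfun_shift_inv:
  assumes "f \<in> polyfun {v. pair v z0 = 0}"
  shows "f (\<lambda>i. z i + t * z0 i) = f z"
  using assms by (induction f rule: polyfun.induct) (auto simp: pair_line)

lemma polyfun_line:
  assumes "f \<in> polyfun W"
  shows "\<exists>p. \<forall>t. f (\<lambda>i. z i + t * z0 i) = poly p t"
  using assms
proof (induction f rule: polyfun.induct)
  case (const c) then show ?case by (rule_tac x="[:c:]" in exI) simp
next
  case (lin v) then show ?case by (rule_tac x="[:pair v z, pair v z0:]" in exI) (simp add: pair_line algebra_simps)
next
  case (add f g)
  then obtain p q where "\<forall>t. f (\<lambda>i. z i + t * z0 i) = poly p t" "\<forall>t. g (\<lambda>i. z i + t * z0 i) = poly q t" by blast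
  then show ?case by (rule_tac x="p + q" in exI) simp
next
  case (mult f g)
  then obtain p q where "\<forall>t. f (\<lambda>i. z i + t * z0 i) = poly p t" "\<forall>t. g (\<lambda>i. z i + t * z0 i) = poly q t" by blast
  then show ?case by (rule_tac x="p * q" in exI) simp
qed

lemma off_prod_nz: "off D (z :: 'n::finite \<Rightarrow> 'a::field) \<Longrightarrow> (\<Prod>\<alpha>\<in>D. pair \<alpha> z ^ e \<alpha>) \<noteq> 0"
  unfolding off_def by (induction D rule: infinite_finite_induct) (auto simp: power_not_zero)

lemma ratfunI:
  assumes "P \<in> polyfun W" "\<forall>z. off D z \<longrightarrow> f z = P z / (\<Prod>\<alpha>\<in>D. pair \<alpha> z ^ e \<alpha>)"
  shows "f \<in> ratfun W D"
  unfolding ratfun_def using assms by blast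

lemma ratfun_cong: "f \<in> ratfun W D \<Longrightarrow> (\<And>z. off D z \<Longrightarrow> f z = g z) \<Longrightarrow> g \<in> ratfun W D"
  unfolding ratfun_def by auto

lemma polyfun_ratfun: "P \<in> polyfun W \<Longrightarrow> P \<in> ratfun W D"
  unfolding ratfun_def by (rule CollectI, rule bexI[of _ P], rule exI[of _ "\<lambda>_. 0"]) auto

lemma ratfun_add:
  assumes fin: "finite D" and DW: "D \<subseteq> W" and f: "f \<in> ratfun W D" and g: "g \<in> ratfun W D"
  shows "(\<lambda>z. f z + g z) \<in> ratfun W D"
proof -
  obtain P e where P: "P \<in> polyfun W" and fe: "\<forall>z. off D z \<longrightarrow> f z = P z / (\<Prod>\<alpha>\<in>D. pair \<alpha> z ^ e \<alpha>)"
    using f unfolding ratfun_def by blast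
  obtain Q e' where Q: "Q \<in> polyfun W" and ge: "\<forall>z. off D z \<longrightarrow> g z = Q z / (\<Prod>\<alpha>\<in>D. pair \<alpha> z ^ e' \<alpha>)"
    using g unfolding ratfun_def by blast
  let ?A = "\<lambda>z. \<Prod>\<alpha>\<in>D. pair \<alpha> z ^ e \<alpha>"
  let ?B = "\<lambda>z. \<Prod>\<alpha>\<in>D. pair \<alpha> z ^ e' \<alpha>"
  have A: "?A \<in> polyfun W" and B: "?B \<in> polyfun W" using polyfun_prod_pow[OF fin DW] by auto
  have N: "(\<lambda>z. P z * ?B z + Q z * ?A z) \<in> polyfun W"
    using polyfun.add[OF polyfun.mult[OF P B] polyfun.mult[OF Q A]] by simp
  have "\<forall>z. off D z \<longrightarrow> f z + g z = (P z * ?B z + Q z * ?A z) / (\<Prod>\<alpha>\<in>D. pair \<alpha> z ^ (e \<alpha> + e' \<alpha>))"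
  proof (intro allI impI)
    fix z assume z: "off D z"
    have "(\<Prod>\<alpha>\<in>D. pair \<alpha> z ^ (e \<alpha> + e' \<alpha>)) = ?A z * ?B z"
      by (simp add: power_add prod.distrib)
    then show "f z + g z = (P z * ?B z + Q z * ?A z) / (\<Prod>\<alpha>\<in>D. pair \<alpha> z ^ (e \<alpha> + e' \<alpha>))"
      using fe ge z off_prod_nz[OF z, of e] off_prod_nz[OF z, of e'] by (simp add: field_simps)
  qed
  then show ?thesis by (rule ratfunI[OF N])
qed

lemma ratfun_mult:
  assumes fin: "finite D" and DW: "D \<subseteq> W" and f: "f \<in> ratfun W D" and g: "g \<in> ratfun W D"
  shows "(\<lambda>z. f z * g z) \<in> ratfun W D"
proof -
  obtain P e where P: "P \<in> polyfun W" and fe: "\<forall>z. off D z \<longrightarrow> f z = P z / (\<Prod>\<alpha>\<in>D. pair \<alpha> z ^ e \<alpha>)"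
    using f unfolding ratfun_def by blast
  obtain Q e' where Q: "Q \<in> polyfun W" and ge: "\<forall>z. off D z \<longrightarrow> g z = Q z / (\<Prod>\<alpha>\<in>D. pair \<alpha> z ^ e' \<alpha>)"
    using g unfolding ratfun_def by blast
  let ?A = "\<lambda>z. \<Prod>\<alpha>\<in>D. pair \<alpha> z ^ e \<alpha>"
  let ?B = "\<lambda>z. \<Prod>\<alpha>\<in>D. pair \<alpha> z ^ e' \<alpha>"
  have N: "(\<lambda>z. P z * Q z) \<in> polyfun W"
    using polyfun.mult[OF P Q] by simp
  have "\<forall>z. off D z \<longrightarrow> f z * g z = (P z * Q z) / (\<Prod>\<alpha>\<in>D. pair \<alpha> z ^ (e \<alpha> + e' \<alpha>))"
  proof (intro allI impI)
    fix z assume z: "off D z"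
    have "(\<Prod>\<alpha>\<in>D. pair \<alpha> z ^ (e \<alpha> + e' \<alpha>)) = ?A z * ?B z"
      by (simp add: power_add prod.distrib)
    then show "f z * g z = (P z * Q z) / (\<Prod>\<alpha>\<in>D. pair \<alpha> z ^ (e \<alpha> + e' \<alpha>))"
      using fe ge z by simp
  qed
  then show ?thesis by (rule ratfunI[OF N])
qed

lemma ratfun_const: "(\<lambda>z. c) \<in> ratfun W D"
  by (rule polyfun_ratfun[OF polyfun.const])

lemma ratfun_lin: "v \<in> W \<Longrightarrow> (\<lambda>z. pair v z) \<in> ratfun W D"
  by (rule polyfun_ratfun[OF polyfun.lin])

lemma ratfun_inv_lin:
  assumes fin: "finite D" and b: "\<beta> \<in> D"
  shows "(\<lambda>z. inverse (pair \<beta> z)) \<in> ratfun W D"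
proof -
  have "\<forall>z. off D z \<longrightarrow> inverse (pair \<beta> z) = 1 / (\<Prod>\<alpha>\<in>D. pair \<alpha> z ^ (if \<alpha> = \<beta> then 1 else 0))"
  proof (intro allI impI)
    fix z
    have "(\<Prod>\<alpha>\<in>D. pair \<alpha> z ^ (if \<alpha> = \<beta> then 1 else 0)) = (\<Prod>\<alpha>\<in>D. if \<alpha> = \<beta> then pair \<alpha> z else 1)"
      by (rule prod.cong) auto
    also have "\<dots> = pair \<beta> z" using fin b by (simp add: prod.delta)
    finally show "inverse (pair \<beta> z) = 1 / (\<Prod>\<alpha>\<in>D. pair \<alpha> z ^ (if \<alpha> = \<beta> then 1 else 0))"
      by (simp add: inverse_eq_divide)
  qed
  then show ?thesis by (rule ratfunI[OF polyfun.const])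
qed

lemma ratfun_minv:
  assumes fin: "finite D" and DW: "D \<subseteq> W" and nu: "set \<nu> \<subseteq> D"
  shows "(\<lambda>z. inverse (\<Prod>\<alpha>\<leftarrow>\<nu>. pair \<alpha> z)) \<in> ratfun W D"
  using nu
proof (induction \<nu>)
  case Nil then show ?case using ratfun_const[of 1 W D] by simp
next
  case (Cons a \<nu>)
  then have "(\<lambda>z. inverse (pair a z) * inverse (\<Prod>\<alpha>\<leftarrow>\<nu>. pair \<alpha> z)) \<in> ratfun W D"
    using ratfun_mult[OF fin DW ratfun_inv_lin[OF fin, of a W]] by simp
  then show ?case by (simp add: inverse_mult_distrib mult.commute)
qed

definition good where
  "good R0 Dom D D0 r \<Delta> V0 res \<longleftrightarrow>
     (\<forall>\<Phi>\<in>Dom. \<forall>\<Psi>\<in>Dom. eq_off D \<Phi> \<Psi> \<longrightarrow> eq_off D0 (res \<Phi>) (res \<Psi>)) \<and>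
     (\<forall>\<Phi>\<in>Dom. \<forall>\<Psi>\<in>Dom.
        eq_off D0 (res (\<lambda>z xi. \<Phi> z xi + \<Psi> z xi)) (\<lambda>z eta. res \<Phi> z eta + res \<Psi> z eta)) \<and>
     (\<forall>\<psi>\<in>R0. \<forall>\<Phi>\<in>Dom.
        eq_off D0 (res (\<lambda>z xi. \<psi> z * \<Phi> z xi)) (\<lambda>z eta. \<psi> z * res \<Phi> z eta)) \<and>
     res_props r \<Delta> V0 res"

lemma good_from_linear:
  "R0_linear R0 Dom D Cod D0 res \<Longrightarrow> res_props r \<Delta> V0 res \<Longrightarrow> good R0 Dom D D0 r \<Delta> V0 res"
  unfolding good_def R0_linear_def by blast

context
  fixes \<Delta> :: "('n::finite \<Rightarrow> 'a::field_char_0) set" and z0 :: "'n \<Rightarrow> 'a" and V0 :: "('n \<Rightarrow> 'a) set"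
  assumes fin: "finite \<Delta>" and V0: "V0 = {v. pair v z0 = 0}"
begin

lemma D0_sub: "\<Delta> \<inter> V0 \<subseteq> V0" by auto
lemma D0_fin: "finite (\<Delta> \<inter> V0)" using fin by simp

lemma R0_RD:
  assumes f: "f \<in> ratfun V0 (\<Delta> \<inter> V0)"
  shows "f \<in> ratfun UNIV \<Delta>"
proof -
  obtain P e where P: "P \<in> polyfun V0" and fe: "\<forall>z. off (\<Delta> \<inter> V0) z \<longrightarrow> f z = P z / (\<Prod>\<alpha>\<in>\<Delta> \<inter> V0. pair \<alpha> z ^ e \<alpha>)"
    using f unfolding ratfun_def by blast
  have P': "P \<in> polyfun UNIV" using polyfun_mono[OF P] by simp
  have "\<forall>z. off \<Delta> z \<longrightarrow> f z = P z / (\<Prod>\<alpha>\<in>\<Delta>. pair \<alpha> z ^ (if \<alpha> \<in> V0 then e \<alpha> else 0))"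
  proof (intro allI impI)
    fix z assume z: "off \<Delta> z"
    then have "off (\<Delta> \<inter> V0) z" unfolding off_def by auto
    moreover have "(\<Prod>\<alpha>\<in>\<Delta> \<inter> V0. pair \<alpha> z ^ e \<alpha>) = (\<Prod>\<alpha>\<in>\<Delta>. pair \<alpha> z ^ (if \<alpha> \<in> V0 then e \<alpha> else 0))"
      using prod.inter_restrict[OF fin, of "\<lambda>\<alpha>. pair \<alpha> z ^ e \<alpha>" V0]
      by (simp add: if_distrib cong: if_cong)
    ultimately show "f z = P z / (\<Prod>\<alpha>\<in>\<Delta>. pair \<alpha> z ^ (if \<alpha> \<in> V0 then e \<alpha> else 0))"
      using fe by simp
  qed
  then show ?thesis by (rule ratfunI[OF P'])
qed

lemma R0_add: "f \<in> ratfun V0 (\<Delta> \<inter> V0) \<Longrightarrow> g \<in> ratfun V0 (\<Delta> \<inter> V0) \<Longrightarrow> (\<lambda>z. f z + g z) \<in> ratfun V0 (\<Delta> \<inter> V0)"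
  by (rule ratfun_add[OF D0_fin D0_sub])

lemma R0_mult: "f \<in> ratfun V0 (\<Delta> \<inter> V0) \<Longrightarrow> g \<in> ratfun V0 (\<Delta> \<inter> V0) \<Longrightarrow> (\<lambda>z. f z * g z) \<in> ratfun V0 (\<Delta> \<inter> V0)"
  by (rule ratfun_mult[OF D0_fin D0_sub])

lemma RD_add: "f \<in> ratfun UNIV \<Delta> \<Longrightarrow> g \<in> ratfun UNIV \<Delta> \<Longrightarrow> (\<lambda>z. f z + g z) \<in> ratfun UNIV \<Delta>"
  by (rule ratfun_add[OF fin]) auto

lemma RD_mult: "f \<in> ratfun UNIV \<Delta> \<Longrightarrow> g \<in> ratfun UNIV \<Delta> \<Longrightarrow> (\<lambda>z. f z * g z) \<in> ratfun UNIV \<Delta>"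
  by (rule ratfun_mult[OF fin]) auto

lemma off_line_finite:
  assumes z: "off (\<Delta> \<inter> V0) z"
  shows "finite {t. \<not> off \<Delta> (\<lambda>i. z i + t * z0 i)}"
proof (rule finite_subset)
  show "{t. \<not> off \<Delta> (\<lambda>i. z i + t * z0 i)} \<subseteq> (\<lambda>\<alpha>. - pair \<alpha> z / pair \<alpha> z0) ` \<Delta>"
  proof
    fix t assume "t \<in> {t. \<not> off \<Delta> (\<lambda>i. z i + t * z0 i)}"
    then obtain \<alpha> where a: "\<alpha> \<in> \<Delta>" and e: "pair \<alpha> z + t * pair \<alpha> z0 = 0"
      unfolding off_def by (auto simp: pair_line)
    have "pair \<alpha> z0 \<noteq> 0"
    proof
      assume "pair \<alpha> z0 = 0"
      then have "\<alpha> \<in> \<Delta> \<inter> V0" using a V0 by simp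
      then have "pair \<alpha> z \<noteq> 0" using z unfolding off_def by blast
      with e \<open>pair \<alpha> z0 = 0\<close> show False by simp
    qed
    then have "t = - pair \<alpha> z / pair \<alpha> z0" using e by (simp add: field_simps add_eq_0_iff)
    then show "t \<in> (\<lambda>\<alpha>. - pair \<alpha> z / pair \<alpha> z0) ` \<Delta>" using a by blast
  qed
  show "finite ((\<lambda>\<alpha>. - pair \<alpha> z / pair \<alpha> z0) ` \<Delta>)" using fin by simp
qed

lemma off_D0_line:
  assumes z: "off (\<Delta> \<inter> V0) z"
  shows "off (\<Delta> \<inter> V0) (\<lambda>i. z i + t * z0 i)"
  using z V0 unfolding off_def by (simp add: pair_line)

lemma R0_shift:
  assumes f: "f \<in> ratfun V0 (\<Delta> \<inter> V0)" and z: "off (\<Delta> \<inter> V0) z"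
  shows "f (\<lambda>i. z i + t * z0 i) = f z"
proof -
  obtain P e where P: "P \<in> polyfun V0" and fe: "\<forall>z. off (\<Delta> \<inter> V0) z \<longrightarrow> f z = P z / (\<Prod>\<alpha>\<in>\<Delta> \<inter> V0. pair \<alpha> z ^ e \<alpha>)"
    using f unfolding ratfun_def by blast
  have "P (\<lambda>i. z i + t * z0 i) = P z" using polyfun_shift_inv[of P z0 z t] P V0 by simp
  moreover have "(\<Prod>\<alpha>\<in>\<Delta> \<inter> V0. pair \<alpha> (\<lambda>i. z i + t * z0 i) ^ e \<alpha>) = (\<Prod>\<alpha>\<in>\<Delta> \<inter> V0. pair \<alpha> z ^ e \<alpha>)"
    by (rule prod.cong) (use V0 in \<open>auto simp: pair_line\<close>)
  ultimately show ?thesis using fe z off_D0_line[OF z, of t] by simp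
qed

lemma israt_line:
  assumes f: "f \<in> ratfun UNIV \<Delta>" and z: "off (\<Delta> \<inter> V0) z"
  shows "israt (\<lambda>t. f (\<lambda>i. z i + t * z0 i))"
proof -
  obtain P e where P: "P \<in> polyfun UNIV" and fe: "\<forall>z. off \<Delta> z \<longrightarrow> f z = P z / (\<Prod>\<alpha>\<in>\<Delta>. pair \<alpha> z ^ e \<alpha>)"
    using f unfolding ratfun_def by blast
  obtain p where p: "\<forall>t. P (\<lambda>i. z i + t * z0 i) = poly p t" using polyfun_line[OF P] by blast
  define q where "q = (\<Prod>\<alpha>\<in>\<Delta>. [:pair \<alpha> z, pair \<alpha> z0:] ^ e \<alpha>)"
  have nz: "[:pair \<alpha> z, pair \<alpha> z0:] \<noteq> 0" if "\<alpha> \<in> \<Delta>" for \<alpha>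
  proof (cases "pair \<alpha> z0 = 0")
    case True
    then have "\<alpha> \<in> \<Delta> \<inter> V0" using that V0 by simp
    then show ?thesis using z unfolding off_def by auto
  qed simp
  have q: "q \<noteq> 0" unfolding q_def using nz fin by (simp add: prod_zero_iff) blast
  have pq: "poly q t = (\<Prod>\<alpha>\<in>\<Delta>. pair \<alpha> (\<lambda>i. z i + t * z0 i) ^ e \<alpha>)" for t
    unfolding q_def by (simp add: poly_prod pair_line algebra_simps)
  have "finite {t. f (\<lambda>i. z i + t * z0 i) \<noteq> poly p t / poly q t}"
    by (rule finite_subset[OF _ off_line_finite[OF z]]) (use fe p pq in auto)
  then show ?thesis unfolding israt_def using q by blast
qed

lemma Res_tens:
  assumes f: "f \<in> ratfun UNIV \<Delta>" and z: "off (\<Delta> \<inter> V0) z"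
  shows "Res z0 (\<lambda>z xi. f z * \<omega> xi) z eta = \<omega> (tcons z0 eta) * neg_res_inf (\<lambda>t. f (\<lambda>i. z i + t * z0 i))"
proof -
  have "Res z0 (\<lambda>z xi. f z * \<omega> xi) z eta = neg_res_inf (\<lambda>t. \<omega> (tcons z0 eta) * f (\<lambda>i. z i + t * z0 i))"
    unfolding Res_def by (simp add: mult.commute)
  also have "\<dots> = \<omega> (tcons z0 eta) * neg_res_inf (\<lambda>t. f (\<lambda>i. z i + t * z0 i))"
    by (rule nri_smult(1)[OF israt_line[OF f z]])
  finally show ?thesis .
qed

lemma israt_tens:
  assumes f: "f \<in> ratfun UNIV \<Delta>" and z: "off (\<Delta> \<inter> V0) z"
  shows "israt (\<lambda>t. f (\<lambda>i. z i + t * z0 i) * c)"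
  using nri_smult(2)[OF israt_line[OF f z], of c] by (simp add: mult.commute)

end

context
  fixes \<Delta> :: "('n::finite \<Rightarrow> 'a::field_char_0) set" and z0 :: "'n \<Rightarrow> 'a" and V0 :: "('n \<Rightarrow> 'a) set"
  assumes fin: "finite \<Delta>" and V0: "V0 = {v. pair v z0 = 0}"
begin

lemma Res_good:
  "good (ratfun V0 (\<Delta> \<inter> V0)) (tens (ratfun UNIV \<Delta>) (top_ext (card (UNIV :: 'n set)) UNIV)) \<Delta> (\<Delta> \<inter> V0)
     (card (UNIV :: 'n set)) \<Delta> V0 (Res z0)"
  unfolding good_def
proof (intro conjI)
  let ?Dom = "tens (ratfun UNIV \<Delta>) (top_ext (card (UNIV :: 'n set)) UNIV)"
  show "\<forall>\<Phi>\<in>?Dom. \<forall>\<Psi>\<in>?Dom. eq_off \<Delta> \<Phi> \<Psi> \<longrightarrow> eq_off (\<Delta> \<inter> V0) (Res z0 \<Phi>) (Res z0 \<Psi>)"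
  proof (intro ballI impI)
    fix \<Phi> \<Psi> assume e: "eq_off \<Delta> \<Phi> \<Psi>"
    show "eq_off (\<Delta> \<inter> V0) (Res z0 \<Phi>) (Res z0 \<Psi>)"
      unfolding eq_off_def
    proof (intro allI impI)
      fix z eta assume z: "off (\<Delta> \<inter> V0) z"
      have "finite {t. \<Phi> (\<lambda>i. z i + t * z0 i) (tcons z0 eta) \<noteq> \<Psi> (\<lambda>i. z i + t * z0 i) (tcons z0 eta)}"
        by (rule finite_subset[OF _ off_line_finite[OF fin V0 z]]) (use e in \<open>auto simp: eq_off_def\<close>)
      then show "Res z0 \<Phi> z eta = Res z0 \<Psi> z eta" unfolding Res_def by (rule nri_cong)
    qed
  qed
  show "\<forall>\<Phi>\<in>?Dom. \<forall>\<Psi>\<in>?Dom. eq_off (\<Delta> \<inter> V0) (Res z0 (\<lambda>z xi. \<Phi> z xi + \<Psi> z xi)) (\<lambda>z eta. Res z0 \<Phi> z eta + Res z0 \<Psi> z eta)"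
  proof (intro ballI)
    fix \<Phi> \<Psi> assume P: "\<Phi> \<in> ?Dom" and Q: "\<Psi> \<in> ?Dom"
    obtain f \<omega> where Pd: "\<Phi> = (\<lambda>z xi. f z * \<omega> xi)" and f: "f \<in> ratfun UNIV \<Delta>" using P unfolding tens_def by blast
    obtain g \<omega>' where Qd: "\<Psi> = (\<lambda>z xi. g z * \<omega>' xi)" and g: "g \<in> ratfun UNIV \<Delta>" using Q unfolding tens_def by blast
    show "eq_off (\<Delta> \<inter> V0) (Res z0 (\<lambda>z xi. \<Phi> z xi + \<Psi> z xi)) (\<lambda>z eta. Res z0 \<Phi> z eta + Res z0 \<Psi> z eta)"
      unfolding eq_off_def
    proof (intro allI impI)
      fix z eta assume z: "off (\<Delta> \<inter> V0) z"
      show "Res z0 (\<lambda>z xi. \<Phi> z xi + \<Psi> z xi) z eta = Res z0 \<Phi> z eta + Res z0 \<Psi> z eta"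
        unfolding Res_def Pd Qd
        by (rule nri_add(1)[OF israt_tens[OF fin V0 f z] israt_tens[OF fin V0 g z]])
    qed
  qed
  show "\<forall>\<psi>\<in>ratfun V0 (\<Delta> \<inter> V0). \<forall>\<Phi>\<in>?Dom. eq_off (\<Delta> \<inter> V0) (Res z0 (\<lambda>z xi. \<psi> z * \<Phi> z xi)) (\<lambda>z eta. \<psi> z * Res z0 \<Phi> z eta)"
  proof (intro ballI)
    fix \<psi> \<Phi> assume psi: "\<psi> \<in> ratfun V0 (\<Delta> \<inter> V0)" and P: "\<Phi> \<in> ?Dom"
    obtain f \<omega> where Pd: "\<Phi> = (\<lambda>z xi. f z * \<omega> xi)" and f: "f \<in> ratfun UNIV \<Delta>" using P unfolding tens_def by blast
    show "eq_off (\<Delta> \<inter> V0) (Res z0 (\<lambda>z xi. \<psi> z * \<Phi> z xi)) (\<lambda>z eta. \<psi> z * Res z0 \<Phi> z eta)"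
      unfolding eq_off_def
    proof (intro allI impI)
      fix z eta assume z: "off (\<Delta> \<inter> V0) z"
      have "Res z0 (\<lambda>z xi. \<psi> z * \<Phi> z xi) z eta = neg_res_inf (\<lambda>t. \<psi> z * (f (\<lambda>i. z i + t * z0 i) * \<omega> (tcons z0 eta)))"
        unfolding Res_def Pd using R0_shift[OF fin V0 psi z] by simp
      also have "\<dots> = \<psi> z * neg_res_inf (\<lambda>t. f (\<lambda>i. z i + t * z0 i) * \<omega> (tcons z0 eta))"
        by (rule nri_smult(1)[OF israt_tens[OF fin V0 f z]])
      also have "\<dots> = \<psi> z * Res z0 \<Phi> z eta" unfolding Res_def Pd by simp
      finally show "Res z0 (\<lambda>z xi. \<psi> z * \<Phi> z xi) z eta = \<psi> z * Res z0 \<Phi> z eta" .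
    qed
  qed
  show "res_props (card (UNIV :: 'n set)) \<Delta> V0 (Res z0)"
    unfolding res_props_def
  proof (intro ballI conjI allI impI)
    fix \<omega> :: "(nat \<Rightarrow> 'n \<Rightarrow> 'a) \<Rightarrow> 'a" assume om: "\<omega> \<in> top_ext (card (UNIV :: 'n set)) UNIV"
    fix \<beta> :: "'n \<Rightarrow> 'a" assume b: "\<beta> \<in> \<Delta> - V0"
    have bz: "pair \<beta> z0 \<noteq> 0" using b V0 by simp
    have fb: "(\<lambda>z. inverse (pair \<beta> z)) \<in> ratfun UNIV \<Delta>" using ratfun_inv_lin[OF fin] b by blast
    show "eq_off (\<Delta> \<inter> V0) (Res z0 (\<lambda>z xi. inverse (pair \<beta> z) * \<omega> xi)) (\<lambda>z eta. dinv (card (UNIV :: 'n set)) V0 \<beta> \<omega> eta)"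
      unfolding eq_off_def
    proof (intro allI impI)
      fix z eta assume z: "off (\<Delta> \<inter> V0) z"
      have "Res z0 (\<lambda>z xi. inverse (pair \<beta> z) * \<omega> xi) z eta
          = \<omega> (tcons z0 eta) * neg_res_inf (\<lambda>t. inverse (pair \<beta> z + t * pair \<beta> z0))"
        using Res_tens[OF fin V0 fb z, of \<omega> eta] by (simp add: pair_line)
      also have "\<dots> = \<omega> (tcons z0 eta) / pair \<beta> z0" using nri_lin[OF bz] by simp
      also have "\<dots> = dinv (card (UNIV :: 'n set)) V0 \<beta> \<omega> eta" using dinv_eq[OF om bz V0] by simp
      finally show "Res z0 (\<lambda>z xi. inverse (pair \<beta> z) * \<omega> xi) z eta = dinv (card (UNIV :: 'n set)) V0 \<beta> \<omega> eta" .
    qed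
  next
    fix \<omega> :: "(nat \<Rightarrow> 'n \<Rightarrow> 'a) \<Rightarrow> 'a" assume om: "\<omega> \<in> top_ext (card (UNIV :: 'n set)) UNIV"
    fix P :: "('n \<Rightarrow> 'a) \<Rightarrow> 'a" assume P: "P \<in> polyfun UNIV"
    show "eq_off (\<Delta> \<inter> V0) (Res z0 (\<lambda>z xi. P z * \<omega> xi)) (\<lambda>z eta. 0)"
      unfolding eq_off_def
    proof (intro allI impI)
      fix z eta assume z: "off (\<Delta> \<inter> V0) z"
      obtain p where p: "\<forall>t. P (\<lambda>i. z i + t * z0 i) = poly p t" using polyfun_line[OF P] by blast
      have "Res z0 (\<lambda>z xi. P z * \<omega> xi) z eta = \<omega> (tcons z0 eta) * neg_res_inf (\<lambda>t. poly p t)"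
        using Res_tens[OF fin V0 polyfun_ratfun[OF P] z, of \<omega> eta] p by simp
      then show "Res z0 (\<lambda>z xi. P z * \<omega> xi) z eta = 0" using nri_poly[of p] by simp
    qed
  next
    fix \<omega> :: "(nat \<Rightarrow> 'n \<Rightarrow> 'a) \<Rightarrow> 'a" assume om: "\<omega> \<in> top_ext (card (UNIV :: 'n set)) UNIV"
    fix \<nu> :: "('n \<Rightarrow> 'a) list" assume nu: "set \<nu> \<subseteq> \<Delta> - V0 \<and> 1 < length \<nu>"
    have fn: "(\<lambda>z. inverse (\<Prod>\<alpha>\<leftarrow>\<nu>. pair \<alpha> z)) \<in> ratfun UNIV \<Delta>"
      by (rule ratfun_minv[OF fin]) (use nu in auto)
    have B: "\<forall>x\<in>set \<nu>. pair x z0 \<noteq> 0" using nu V0 by auto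
    show "eq_off (\<Delta> \<inter> V0) (Res z0 (\<lambda>z xi. inverse (\<Prod>\<alpha>\<leftarrow>\<nu>. pair \<alpha> z) * \<omega> xi)) (\<lambda>z eta. 0)"
      unfolding eq_off_def
    proof (intro allI impI)
      fix z eta assume z: "off (\<Delta> \<inter> V0) z"
      have "Res z0 (\<lambda>z xi. inverse (\<Prod>\<alpha>\<leftarrow>\<nu>. pair \<alpha> z) * \<omega> xi) z eta
          = \<omega> (tcons z0 eta) * neg_res_inf (\<lambda>t. inverse (\<Prod>\<alpha>\<leftarrow>\<nu>. pair \<alpha> z + t * pair \<alpha> z0))"
        using Res_tens[OF fin V0 fn z, of \<omega> eta] by (simp add: pair_line)
      also have "\<dots> = 0" using nri_prod[OF B, of "\<lambda>\<alpha>. pair \<alpha> z"] nu by simp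
      finally show "Res z0 (\<lambda>z xi. inverse (\<Prod>\<alpha>\<leftarrow>\<nu>. pair \<alpha> z) * \<omega> xi) z eta = 0" .
    qed
  qed
qed

end

inductive_set DEC :: "('n::finite \<Rightarrow> 'a::field) set \<Rightarrow> ('n \<Rightarrow> 'a) set \<Rightarrow> (('n \<Rightarrow> 'a) \<Rightarrow> 'a) set"
  for \<Delta> V0 where
  dpoly: "P \<in> polyfun UNIV \<Longrightarrow> c \<in> ratfun V0 (\<Delta> \<inter> V0) \<Longrightarrow> (\<lambda>z. c z * P z) \<in> DEC \<Delta> V0"
| dminv: "set \<nu> \<subseteq> \<Delta> - V0 \<Longrightarrow> \<nu> \<noteq> [] \<Longrightarrow> c \<in> ratfun V0 (\<Delta> \<inter> V0)
           \<Longrightarrow> (\<lambda>z. c z * inverse (\<Prod>\<alpha>\<leftarrow>\<nu>. pair \<alpha> z)) \<in> DEC \<Delta> V0"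
| dadd: "f \<in> DEC \<Delta> V0 \<Longrightarrow> g \<in> DEC \<Delta> V0 \<Longrightarrow> (\<lambda>z. f z + g z) \<in> DEC \<Delta> V0"
| dcong: "f \<in> DEC \<Delta> V0 \<Longrightarrow> \<forall>z. off \<Delta> z \<longrightarrow> f z = g z \<Longrightarrow> g \<in> DEC \<Delta> V0"

lemma DEC_eq: "f \<in> DEC \<Delta> V0 \<Longrightarrow> (\<And>z. f z = g z) \<Longrightarrow> g \<in> DEC \<Delta> V0"
  by (rule dcong) auto

context
  fixes \<Delta> :: "('n::finite \<Rightarrow> 'a::field_char_0) set" and z0 :: "'n \<Rightarrow> 'a" and V0 :: "('n \<Rightarrow> 'a) set"
  assumes fin: "finite \<Delta>" and V0: "V0 = {v. pair v z0 = 0}"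
begin

lemma DEC_RD: "f \<in> DEC \<Delta> V0 \<Longrightarrow> f \<in> ratfun UNIV \<Delta>"
proof (induction f rule: DEC.induct)
  case (dpoly P c)
  then show ?case using RD_mult[OF fin V0 R0_RD[OF fin V0] polyfun_ratfun] by blast
next
  case (dminv \<nu> c)
  have "(\<lambda>z. inverse (\<Prod>\<alpha>\<leftarrow>\<nu>. pair \<alpha> z)) \<in> ratfun UNIV \<Delta>"
    by (rule ratfun_minv[OF fin]) (use dminv in auto)
  then show ?case using RD_mult[OF fin V0 R0_RD[OF fin V0 dminv(3)]] by blast
next
  case (dadd f g) then show ?case using RD_add[OF fin V0] by blast
next
  case (dcong f g) then show ?case using ratfun_cong by metis
qed

lemma R0_const: "(\<lambda>z. c) \<in> ratfun V0 (\<Delta> \<inter> V0)" by (rule ratfun_const)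

lemma DEC_smult:
  assumes c: "c \<in> ratfun V0 (\<Delta> \<inter> V0)"
  shows "f \<in> DEC \<Delta> V0 \<Longrightarrow> (\<lambda>z. c z * f z) \<in> DEC \<Delta> V0"
proof (induction f rule: DEC.induct)
  case (dpoly P c')
  have "(\<lambda>z. (c z * c' z) * P z) \<in> DEC \<Delta> V0" by (rule DEC.dpoly[OF dpoly(1) R0_mult[OF fin V0 c dpoly(2)]])
  then show ?case by (rule DEC_eq) (simp add: mult.assoc)
next
  case (dminv \<nu> c')
  have "(\<lambda>z. (c z * c' z) * inverse (\<Prod>\<alpha>\<leftarrow>\<nu>. pair \<alpha> z)) \<in> DEC \<Delta> V0"
    by (rule DEC.dminv[OF dminv(1,2) R0_mult[OF fin V0 c dminv(3)]])
  then show ?case by (rule DEC_eq) (simp add: mult.assoc)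
next
  case (dadd f g)
  have "(\<lambda>z. c z * f z + c z * g z) \<in> DEC \<Delta> V0" by (rule DEC.dadd[OF dadd(3,4)])
  then show ?case by (rule DEC_eq) (simp add: distrib_left)
next
  case (dcong f g)
  show ?case by (rule DEC.dcong[OF dcong(3)]) (use dcong(2) in auto)
qed

lemma DEC_const_minv:
  assumes nu: "set \<nu> \<subseteq> \<Delta> - V0"
  shows "(\<lambda>z. a * inverse (\<Prod>\<alpha>\<leftarrow>\<nu>. pair \<alpha> z)) \<in> DEC \<Delta> V0"
proof (cases "\<nu> = []")
  case True
  have "(\<lambda>z. (\<lambda>z. a) z * (\<lambda>z. 1) z) \<in> DEC \<Delta> V0" by (rule DEC.dpoly[OF polyfun.const R0_const])
  then show ?thesis by (rule DEC_eq) (simp add: True)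
next
  case False
  show ?thesis using DEC.dminv[OF nu False R0_const[of a]] by simp
qed

lemma DEC_poly_minv:
  assumes P: "P \<in> polyfun UNIV"
  shows "\<forall>\<nu>. set \<nu> \<subseteq> \<Delta> - V0 \<longrightarrow> (\<lambda>z. P z * inverse (\<Prod>\<alpha>\<leftarrow>\<nu>. pair \<alpha> z)) \<in> DEC \<Delta> V0"
  using P
proof (induction P rule: polyfun.induct)
  case (const c)
  then show ?case using DEC_const_minv by blast
next
  case (lin v)
  show ?case
  proof (intro allI impI)
    fix \<nu> :: "('n \<Rightarrow> 'a) list" assume nu: "set \<nu> \<subseteq> \<Delta> - V0"
    show "(\<lambda>z. pair v z * inverse (\<Prod>\<alpha>\<leftarrow>\<nu>. pair \<alpha> z)) \<in> DEC \<Delta> V0"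
    proof (cases \<nu>)
      case Nil
      have "(\<lambda>z. (\<lambda>z. 1) z * (\<lambda>z. pair v z) z) \<in> DEC \<Delta> V0" by (rule DEC.dpoly[OF polyfun.lin R0_const]) simp
      then show ?thesis by (rule DEC_eq) (simp add: Nil)
    next
      case (Cons \<beta> \<nu>')
      have b: "\<beta> \<in> \<Delta> - V0" and nu': "set \<nu>' \<subseteq> \<Delta> - V0" using nu Cons by auto
      have bz: "pair \<beta> z0 \<noteq> 0" using b V0 by simp
      define a where "a = pair v z0 / pair \<beta> z0"
      define v' where "v' = (\<lambda>i. v i - a * \<beta> i)"
      have pv': "pair v' z = pair v z - a * pair \<beta> z" for z unfolding v'_def by (rule pair_diff)
      have v'V: "v' \<in> V0" using pv'[of z0] bz V0 by (simp add: a_def)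
      have t1: "(\<lambda>z. a * inverse (\<Prod>\<alpha>\<leftarrow>\<nu>'. pair \<alpha> z)) \<in> DEC \<Delta> V0" by (rule DEC_const_minv[OF nu'])
      have t2: "(\<lambda>z. pair v' z * inverse (\<Prod>\<alpha>\<leftarrow>\<nu>. pair \<alpha> z)) \<in> DEC \<Delta> V0"
        by (rule DEC.dminv[OF nu]) (use Cons ratfun_lin[OF v'V] in auto)
      have "(\<lambda>z. a * inverse (\<Prod>\<alpha>\<leftarrow>\<nu>'. pair \<alpha> z) + pair v' z * inverse (\<Prod>\<alpha>\<leftarrow>\<nu>. pair \<alpha> z)) \<in> DEC \<Delta> V0"
        by (rule DEC.dadd[OF t1 t2])
      then show ?thesis
      proof (rule DEC.dcong, intro allI impI)
        fix z assume z: "off \<Delta> z"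
        have bz': "pair \<beta> z \<noteq> 0" using z b unfolding off_def by auto
        let ?M = "\<Prod>\<alpha>\<leftarrow>\<nu>'. pair \<alpha> z"
        have "a * inverse ?M + pair v' z * inverse (pair \<beta> z * ?M)
            = a * (pair \<beta> z * inverse (pair \<beta> z)) * inverse ?M + (pair v z - a * pair \<beta> z) * (inverse (pair \<beta> z) * inverse ?M)"
          using bz' by (simp add: pv' inverse_mult_distrib)
        also have "\<dots> = pair v z * (inverse (pair \<beta> z) * inverse ?M)"
          by (simp add: algebra_simps)
        finally show "a * inverse ?M + pair v' z * inverse (\<Prod>\<alpha>\<leftarrow>\<nu>. pair \<alpha> z) = pair v z * inverse (\<Prod>\<alpha>\<leftarrow>\<nu>. pair \<alpha> z)"
          using Cons by (simp add: inverse_mult_distrib)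
      qed
    qed
  qed
next
  case (add f g)
  show ?case
  proof (intro allI impI)
    fix \<nu> :: "('n \<Rightarrow> 'a) list" assume nu: "set \<nu> \<subseteq> \<Delta> - V0"
    have "(\<lambda>z. f z * inverse (\<Prod>\<alpha>\<leftarrow>\<nu>. pair \<alpha> z) + g z * inverse (\<Prod>\<alpha>\<leftarrow>\<nu>. pair \<alpha> z)) \<in> DEC \<Delta> V0"
      using add.IH nu by (intro DEC.dadd) auto
    then show "(\<lambda>z. (f z + g z) * inverse (\<Prod>\<alpha>\<leftarrow>\<nu>. pair \<alpha> z)) \<in> DEC \<Delta> V0"
      by (rule DEC_eq) (simp add: distrib_right)
  qed
next
  case (mult f g)
  have key: "h \<in> DEC \<Delta> V0 \<Longrightarrow> (\<lambda>z. f z * h z) \<in> DEC \<Delta> V0" for h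
  proof (induction h rule: DEC.induct)
    case (dpoly P c)
    have "(\<lambda>z. c z * (\<lambda>z. f z * P z) z) \<in> DEC \<Delta> V0"
      by (rule DEC.dpoly[OF polyfun.mult[OF mult.hyps(1) dpoly(1)] dpoly(2)])
    then show ?case by (rule DEC_eq) (simp add: ac_simps)
  next
    case (dminv \<nu> c)
    have "(\<lambda>z. c z * (f z * inverse (\<Prod>\<alpha>\<leftarrow>\<nu>. pair \<alpha> z))) \<in> DEC \<Delta> V0"
      by (rule DEC_smult[OF dminv(3)]) (use mult.IH(1) dminv(1) in blast)
    then show ?case by (rule DEC_eq) (simp add: ac_simps)
  next
    case (dadd h1 h2)
    have "(\<lambda>z. f z * h1 z + f z * h2 z) \<in> DEC \<Delta> V0" by (rule DEC.dadd[OF dadd(3,4)])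
    then show ?case by (rule DEC_eq) (simp add: distrib_left)
  next
    case (dcong h1 h2)
    show ?case by (rule DEC.dcong[OF dcong(3)]) (use dcong(2) in auto)
  qed
  show ?case
  proof (intro allI impI)
    fix \<nu> :: "('n \<Rightarrow> 'a) list" assume nu: "set \<nu> \<subseteq> \<Delta> - V0"
    have "(\<lambda>z. f z * (g z * inverse (\<Prod>\<alpha>\<leftarrow>\<nu>. pair \<alpha> z))) \<in> DEC \<Delta> V0"
      by (rule key) (use mult.IH(2) nu in blast)
    then show "(\<lambda>z. f z * g z * inverse (\<Prod>\<alpha>\<leftarrow>\<nu>. pair \<alpha> z)) \<in> DEC \<Delta> V0"
      by (rule DEC_eq) (simp add: ac_simps)
  qed
qed

lemma prod_concat_rep:
  "(\<Prod>\<alpha>\<leftarrow>concat (map (\<lambda>\<alpha>. replicate (e \<alpha>) \<alpha>) L). pair \<alpha> z) = (\<Prod>\<alpha>\<leftarrow>L. pair \<alpha> z ^ e \<alpha>)"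
  by (induction L) (auto simp: prod_list_replicate)

lemma RD_DEC:
  assumes f: "f \<in> ratfun UNIV \<Delta>"
  shows "f \<in> DEC \<Delta> V0"
proof -
  obtain P e where P: "P \<in> polyfun UNIV" and fe: "\<forall>z. off \<Delta> z \<longrightarrow> f z = P z / (\<Prod>\<alpha>\<in>\<Delta>. pair \<alpha> z ^ e \<alpha>)"
    using f unfolding ratfun_def by blast
  obtain L where L: "set L = \<Delta> - V0" "distinct L" using finite_distinct_list[of "\<Delta> - V0"] fin by auto
  define \<nu> where "\<nu> = concat (map (\<lambda>\<alpha>. replicate (e \<alpha>) \<alpha>) L)"
  have "set \<nu> \<subseteq> set L" unfolding \<nu>_def by (induction L) auto
  then have nu: "set \<nu> \<subseteq> \<Delta> - V0" using L(1) by simp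
  have pn: "(\<Prod>\<alpha>\<leftarrow>\<nu>. pair \<alpha> z) = (\<Prod>\<alpha>\<in>\<Delta> - V0. pair \<alpha> z ^ e \<alpha>)" for z
  proof -
    have "(\<Prod>\<alpha>\<leftarrow>\<nu>. pair \<alpha> z) = (\<Prod>\<alpha>\<leftarrow>L. pair \<alpha> z ^ e \<alpha>)" unfolding \<nu>_def by (rule prod_concat_rep)
    also have "\<dots> = (\<Prod>\<alpha>\<in>set L. pair \<alpha> z ^ e \<alpha>)" by (rule prod.distinct_set_conv_list[OF L(2), symmetric])
    finally show ?thesis unfolding L(1) .
  qed
  define c0 where "c0 = (\<lambda>z. inverse (\<Prod>\<alpha>\<in>\<Delta> \<inter> V0. pair \<alpha> z ^ e \<alpha>))"
  have c0: "c0 \<in> ratfun V0 (\<Delta> \<inter> V0)"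
    by (rule ratfunI[where e=e, OF polyfun.const[of 1]]) (simp add: c0_def inverse_eq_divide)
  have "(\<lambda>z. c0 z * (P z * inverse (\<Prod>\<alpha>\<leftarrow>\<nu>. pair \<alpha> z))) \<in> DEC \<Delta> V0"
    by (rule DEC_smult[OF c0]) (use DEC_poly_minv[OF P] nu in blast)
  then show ?thesis
  proof (rule DEC.dcong, intro allI impI)
    fix z assume z: "off \<Delta> z"
    have "(\<Prod>\<alpha>\<in>\<Delta>. pair \<alpha> z ^ e \<alpha>) = (\<Prod>\<alpha>\<in>\<Delta> \<inter> V0. pair \<alpha> z ^ e \<alpha>) * (\<Prod>\<alpha>\<in>\<Delta> - V0. pair \<alpha> z ^ e \<alpha>)"
      by (rule prod.Int_Diff[OF fin])
    then have "f z = P z * (inverse (\<Prod>\<alpha>\<in>\<Delta> \<inter> V0. pair \<alpha> z ^ e \<alpha>) * inverse (\<Prod>\<alpha>\<in>\<Delta> - V0. pair \<alpha> z ^ e \<alpha>))"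
      using fe z by (simp add: divide_inverse inverse_mult_distrib)
    then show "c0 z * (P z * inverse (\<Prod>\<alpha>\<leftarrow>\<nu>. pair \<alpha> z)) = f z"
      unfolding c0_def pn by (metis mult.left_commute)
  qed
qed

end

context
  fixes \<Delta> :: "('n::finite \<Rightarrow> 'a::field_char_0) set" and z0 :: "'n \<Rightarrow> 'a" and V0 :: "('n \<Rightarrow> 'a) set"
  assumes fin: "finite \<Delta>" and V0: "V0 = {v. pair v z0 = 0}"
begin

abbreviation "R0 \<equiv> ratfun V0 (\<Delta> \<inter> V0)"
abbreviation "Dom \<equiv> tens (ratfun UNIV \<Delta>) (top_ext (card (UNIV :: 'n set)) UNIV)"
abbreviation "GD \<equiv> good R0 Dom \<Delta> (\<Delta> \<inter> V0) (card (UNIV :: 'n set)) \<Delta> V0"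

lemma tensI: "f \<in> ratfun UNIV \<Delta> \<Longrightarrow> \<omega> \<in> top_ext (card (UNIV :: 'n set)) UNIV \<Longrightarrow> (\<lambda>z xi. f z * \<omega> xi) \<in> Dom"
  unfolding tens_def by blast

lemma good_c2: "GD res \<Longrightarrow> \<Phi> \<in> Dom \<Longrightarrow> \<Psi> \<in> Dom \<Longrightarrow> eq_off \<Delta> \<Phi> \<Psi> \<Longrightarrow> eq_off (\<Delta> \<inter> V0) (res \<Phi>) (res \<Psi>)"
  unfolding good_def by blast
lemma good_c3: "GD res \<Longrightarrow> \<Phi> \<in> Dom \<Longrightarrow> \<Psi> \<in> Dom \<Longrightarrow>
   eq_off (\<Delta> \<inter> V0) (res (\<lambda>z xi. \<Phi> z xi + \<Psi> z xi)) (\<lambda>z eta. res \<Phi> z eta + res \<Psi> z eta)"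
  unfolding good_def by blast
lemma good_c4: "GD res \<Longrightarrow> \<psi> \<in> R0 \<Longrightarrow> \<Phi> \<in> Dom \<Longrightarrow>
   eq_off (\<Delta> \<inter> V0) (res (\<lambda>z xi. \<psi> z * \<Phi> z xi)) (\<lambda>z eta. \<psi> z * res \<Phi> z eta)"
  unfolding good_def by blast
lemma good_p: "GD res \<Longrightarrow> res_props (card (UNIV :: 'n set)) \<Delta> V0 res"
  unfolding good_def by blast

lemma DEC_res:
  assumes om: "\<omega> \<in> top_ext (card (UNIV :: 'n set)) UNIV"
  shows "f \<in> DEC \<Delta> V0 \<Longrightarrow> \<exists>\<psi>\<in>R0. \<forall>res. GD res \<longrightarrow>
     eq_off (\<Delta> \<inter> V0) (res (\<lambda>z xi. f z * \<omega> xi)) (\<lambda>z eta. \<psi> z * \<omega> (tcons z0 eta))"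
proof (induction f rule: DEC.induct)
  case (dpoly P c)
  have PD: "(\<lambda>z xi. P z * \<omega> xi) \<in> Dom" by (rule tensI[OF polyfun_ratfun[OF dpoly(1)] om])
  have e: "(\<lambda>z xi. c z * P z * \<omega> xi) = (\<lambda>z xi. c z * (\<lambda>z xi. P z * \<omega> xi) z xi)" by (simp add: mult.assoc)
  show ?case
  proof (rule bexI[of _ "\<lambda>z. 0"], intro allI impI)
    fix res assume gd: "GD res"
    have a: "eq_off (\<Delta> \<inter> V0) (res (\<lambda>z xi. P z * \<omega> xi)) (\<lambda>z eta. 0)"
      using good_p[OF gd] dpoly(1) om unfolding res_props_def by blast
    have b: "eq_off (\<Delta> \<inter> V0) (res (\<lambda>z xi. c z * (\<lambda>z xi. P z * \<omega> xi) z xi)) (\<lambda>z eta. c z * res (\<lambda>z xi. P z * \<omega> xi) z eta)"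
      by (rule good_c4[OF gd dpoly(2) PD])
    show "eq_off (\<Delta> \<inter> V0) (res (\<lambda>z xi. c z * P z * \<omega> xi)) (\<lambda>z eta. 0 * \<omega> (tcons z0 eta))"
      using a b unfolding e eq_off_def by simp
  qed (rule ratfun_const)
next
  case (dminv \<nu> c)
  have nD: "set \<nu> \<subseteq> \<Delta>" using dminv(1) by auto
  have mD: "(\<lambda>z xi. inverse (\<Prod>\<alpha>\<leftarrow>\<nu>. pair \<alpha> z) * \<omega> xi) \<in> Dom"
    by (rule tensI[OF ratfun_minv[OF fin _ nD] om]) simp
  have e: "(\<lambda>z xi. c z * inverse (\<Prod>\<alpha>\<leftarrow>\<nu>. pair \<alpha> z) * \<omega> xi) = (\<lambda>z xi. c z * (\<lambda>z xi. inverse (\<Prod>\<alpha>\<leftarrow>\<nu>. pair \<alpha> z) * \<omega> xi) z xi)"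
    by (simp add: mult.assoc)
  show ?case
  proof (cases "length \<nu> = 1")
    case True
    then obtain \<beta> where nb: "\<nu> = [\<beta>]" by (cases \<nu>) auto
    have b: "\<beta> \<in> \<Delta> - V0" using dminv(1) nb by simp
    have bz: "pair \<beta> z0 \<noteq> 0" using b V0 by simp
    show ?thesis
    proof (rule bexI[of _ "\<lambda>z. c z * inverse (pair \<beta> z0)"], intro allI impI)
      fix res assume gd: "GD res"
      have a: "eq_off (\<Delta> \<inter> V0) (res (\<lambda>z xi. inverse (pair \<beta> z) * \<omega> xi)) (\<lambda>z eta. dinv (card (UNIV :: 'n set)) V0 \<beta> \<omega> eta)"
        using good_p[OF gd] b om unfolding res_props_def by blast
      then have a': "eq_off (\<Delta> \<inter> V0) (res (\<lambda>z xi. inverse (\<Prod>\<alpha>\<leftarrow>\<nu>. pair \<alpha> z) * \<omega> xi)) (\<lambda>z eta. \<omega> (tcons z0 eta) / pair \<beta> z0)"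
        using dinv_eq[OF om bz V0] nb by simp
      have c: "eq_off (\<Delta> \<inter> V0) (res (\<lambda>z xi. c z * (\<lambda>z xi. inverse (\<Prod>\<alpha>\<leftarrow>\<nu>. pair \<alpha> z) * \<omega> xi) z xi))
          (\<lambda>z eta. c z * res (\<lambda>z xi. inverse (\<Prod>\<alpha>\<leftarrow>\<nu>. pair \<alpha> z) * \<omega> xi) z eta)"
        by (rule good_c4[OF gd dminv(3) mD])
      show "eq_off (\<Delta> \<inter> V0) (res (\<lambda>z xi. c z * inverse (\<Prod>\<alpha>\<leftarrow>\<nu>. pair \<alpha> z) * \<omega> xi))
          (\<lambda>z eta. c z * inverse (pair \<beta> z0) * \<omega> (tcons z0 eta))"
        using a' c unfolding e eq_off_def by (simp add: divide_inverse ac_simps)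
    qed (rule R0_mult[OF fin V0 dminv(3) ratfun_const])
  next
    case False
    then have len: "1 < length \<nu>" using dminv(2) by (cases \<nu>) auto
    show ?thesis
    proof (rule bexI[of _ "\<lambda>z. 0"], intro allI impI)
      fix res assume gd: "GD res"
      have a: "eq_off (\<Delta> \<inter> V0) (res (\<lambda>z xi. inverse (\<Prod>\<alpha>\<leftarrow>\<nu>. pair \<alpha> z) * \<omega> xi)) (\<lambda>z eta. 0)"
        using good_p[OF gd] dminv(1) len om unfolding res_props_def by blast
      have c: "eq_off (\<Delta> \<inter> V0) (res (\<lambda>z xi. c z * (\<lambda>z xi. inverse (\<Prod>\<alpha>\<leftarrow>\<nu>. pair \<alpha> z) * \<omega> xi) z xi))
          (\<lambda>z eta. c z * res (\<lambda>z xi. inverse (\<Prod>\<alpha>\<leftarrow>\<nu>. pair \<alpha> z) * \<omega> xi) z eta)"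
        by (rule good_c4[OF gd dminv(3) mD])
      show "eq_off (\<Delta> \<inter> V0) (res (\<lambda>z xi. c z * inverse (\<Prod>\<alpha>\<leftarrow>\<nu>. pair \<alpha> z) * \<omega> xi)) (\<lambda>z eta. 0 * \<omega> (tcons z0 eta))"
        using a c unfolding e eq_off_def by simp
    qed (rule ratfun_const)
  qed
next
  case (dadd f g)
  obtain \<psi>f where pf: "\<psi>f \<in> R0" and hf: "\<forall>res. GD res \<longrightarrow> eq_off (\<Delta> \<inter> V0) (res (\<lambda>z xi. f z * \<omega> xi)) (\<lambda>z eta. \<psi>f z * \<omega> (tcons z0 eta))"
    using dadd.IH(1) by blast
  obtain \<psi>g where pg: "\<psi>g \<in> R0" and hg: "\<forall>res. GD res \<longrightarrow> eq_off (\<Delta> \<inter> V0) (res (\<lambda>z xi. g z * \<omega> xi)) (\<lambda>z eta. \<psi>g z * \<omega> (tcons z0 eta))"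
    using dadd.IH(2) by blast
  have fD: "(\<lambda>z xi. f z * \<omega> xi) \<in> Dom" by (rule tensI[OF DEC_RD[OF fin V0 dadd(1)] om])
  have gD: "(\<lambda>z xi. g z * \<omega> xi) \<in> Dom" by (rule tensI[OF DEC_RD[OF fin V0 dadd(2)] om])
  have e: "(\<lambda>z xi. (f z + g z) * \<omega> xi) = (\<lambda>z xi. (\<lambda>z xi. f z * \<omega> xi) z xi + (\<lambda>z xi. g z * \<omega> xi) z xi)"
    by (simp add: distrib_right)
  show ?case
  proof (rule bexI[of _ "\<lambda>z. \<psi>f z + \<psi>g z"], intro allI impI)
    fix res assume gd: "GD res"
    have c: "eq_off (\<Delta> \<inter> V0) (res (\<lambda>z xi. (\<lambda>z xi. f z * \<omega> xi) z xi + (\<lambda>z xi. g z * \<omega> xi) z xi))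
        (\<lambda>z eta. res (\<lambda>z xi. f z * \<omega> xi) z eta + res (\<lambda>z xi. g z * \<omega> xi) z eta)"
      by (rule good_c3[OF gd fD gD])
    show "eq_off (\<Delta> \<inter> V0) (res (\<lambda>z xi. (f z + g z) * \<omega> xi)) (\<lambda>z eta. (\<psi>f z + \<psi>g z) * \<omega> (tcons z0 eta))"
      using c hf gd hg unfolding e eq_off_def by (simp add: distrib_right)
  qed (rule R0_add[OF fin V0 pf pg])
next
  case (dcong f g)
  obtain \<psi>f where pf: "\<psi>f \<in> R0" and hf: "\<forall>res. GD res \<longrightarrow> eq_off (\<Delta> \<inter> V0) (res (\<lambda>z xi. f z * \<omega> xi)) (\<lambda>z eta. \<psi>f z * \<omega> (tcons z0 eta))"
    using dcong.IH by blast
  have fR: "f \<in> ratfun UNIV \<Delta>" by (rule DEC_RD[OF fin V0 dcong(1)])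
  have gR: "g \<in> ratfun UNIV \<Delta>" by (rule ratfun_cong[OF fR]) (use dcong(2) in auto)
  have fD: "(\<lambda>z xi. f z * \<omega> xi) \<in> Dom" by (rule tensI[OF fR om])
  have gD: "(\<lambda>z xi. g z * \<omega> xi) \<in> Dom" by (rule tensI[OF gR om])
  have eo: "eq_off \<Delta> (\<lambda>z xi. g z * \<omega> xi) (\<lambda>z xi. f z * \<omega> xi)"
    unfolding eq_off_def using dcong(2) by simp
  show ?case
  proof (rule bexI[OF _ pf], intro allI impI)
    fix res assume gd: "GD res"
    have c: "eq_off (\<Delta> \<inter> V0) (res (\<lambda>z xi. g z * \<omega> xi)) (res (\<lambda>z xi. f z * \<omega> xi))"
      by (rule good_c2[OF gd gD fD eo])
    show "eq_off (\<Delta> \<inter> V0) (res (\<lambda>z xi. g z * \<omega> xi)) (\<lambda>z eta. \<psi>f z * \<omega> (tcons z0 eta))"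
      using c hf gd unfolding eq_off_def by simp
  qed
qed

lemma Dom_res:
  assumes P: "\<Phi> \<in> Dom"
  shows "\<exists>\<psi>\<in>R0. \<exists>\<omega>0\<in>top_ext (card (UNIV :: 'n set) - 1) V0. \<forall>res. GD res \<longrightarrow>
     eq_off (\<Delta> \<inter> V0) (res \<Phi>) (\<lambda>z eta. \<psi> z * \<omega>0 eta)"
proof -
  obtain f \<omega> where Pd: "\<Phi> = (\<lambda>z xi. f z * \<omega> xi)" and f: "f \<in> ratfun UNIV \<Delta>"
    and om: "\<omega> \<in> top_ext (card (UNIV :: 'n set)) UNIV" using P unfolding tens_def by blast
  obtain \<psi> where p1: "\<psi> \<in> R0" and p2: "\<forall>res. GD res \<longrightarrow> eq_off (\<Delta> \<inter> V0) (res (\<lambda>z xi. f z * \<omega> xi)) (\<lambda>z eta. \<psi> z * \<omega> (tcons z0 eta))"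
    using DEC_res[OF om RD_DEC[OF fin V0 f]] by blast
  have t: "(\<lambda>eta. \<omega> (tcons z0 eta)) \<in> top_ext (card (UNIV :: 'n set) - 1) V0"
    using iota_top_ext[OF om, of z0] V0 by simp
  show ?thesis unfolding Pd
  proof (rule bexI[OF _ p1], rule bexI[OF _ t])
    show "\<forall>res. GD res \<longrightarrow> eq_off (\<Delta> \<inter> V0) (res (\<lambda>z xi. f z * \<omega> xi)) (\<lambda>z eta. \<psi> z * \<omega> (tcons z0 eta))"
      by (rule p2)
  qed
qed

end

theorem mainTheorem6:
  fixes \<Delta> :: "('n::finite \<Rightarrow> 'a::field_char_0) set" and z0 :: "'n \<Rightarrow> 'a"
    and V0 :: "('n \<Rightarrow> 'a) set"
  assumes "finite \<Delta>" and "(\<lambda>i. 0) \<notin> \<Delta>"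
    and "\<forall>v. \<exists>c. v = (\<lambda>i. \<Sum>\<alpha>\<in>\<Delta>. c \<alpha> * \<alpha> i)"
    and "z0 \<noteq> (\<lambda>i. 0)" and "V0 = {v. pair v z0 = 0}"
  shows "R0_linear (ratfun V0 (\<Delta> \<inter> V0))
           (tens (ratfun UNIV \<Delta>) (top_ext (card (UNIV :: 'n set)) UNIV)) \<Delta>
           (tens (ratfun V0 (\<Delta> \<inter> V0)) (top_ext ((card (UNIV :: 'n set)) - 1) V0)) (\<Delta> \<inter> V0)
           (Res z0)
       \<and> res_props (card (UNIV :: 'n set)) \<Delta> V0 (Res z0)
       \<and> (\<forall>res. R0_linear (ratfun V0 (\<Delta> \<inter> V0))
                  (tens (ratfun UNIV \<Delta>) (top_ext (card (UNIV :: 'n set)) UNIV)) \<Delta>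
                  (tens (ratfun V0 (\<Delta> \<inter> V0)) (top_ext ((card (UNIV :: 'n set)) - 1) V0)) (\<Delta> \<inter> V0) res
                \<and> res_props (card (UNIV :: 'n set)) \<Delta> V0 res
              \<longrightarrow> (\<forall>\<Phi>\<in>tens (ratfun UNIV \<Delta>) (top_ext (card (UNIV :: 'n set)) UNIV).
                     eq_off (\<Delta> \<inter> V0) (res \<Phi>) (Res z0 \<Phi>)))"
proof -
  note fin = assms(1) and V0 = assms(5)
  let ?R0 = "ratfun V0 (\<Delta> \<inter> V0)"
  let ?Dom = "tens (ratfun UNIV \<Delta>) (top_ext (card (UNIV :: 'n set)) UNIV)"
  let ?Cod = "tens (ratfun V0 (\<Delta> \<inter> V0)) (top_ext ((card (UNIV :: 'n set)) - 1) V0)"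
  let ?GD = "good ?R0 ?Dom \<Delta> (\<Delta> \<inter> V0) (card (UNIV :: 'n set)) \<Delta> V0"
  have gR: "?GD (Res z0)" by (rule Res_good[OF fin V0])
  have c1: "\<forall>\<Phi>\<in>?Dom. \<exists>\<Psi>\<in>?Cod. eq_off (\<Delta> \<inter> V0) (Res z0 \<Phi>) \<Psi>"
  proof
    fix \<Phi> assume P: "\<Phi> \<in> ?Dom"
    obtain \<psi> \<omega>0 where "\<psi> \<in> ?R0" "\<omega>0 \<in> top_ext (card (UNIV :: 'n set) - 1) V0"
      and h: "\<forall>res. ?GD res \<longrightarrow> eq_off (\<Delta> \<inter> V0) (res \<Phi>) (\<lambda>z eta. \<psi> z * \<omega>0 eta)"
      using Dom_res[OF fin V0 P] by blast
    moreover have "(\<lambda>z eta. \<psi> z * \<omega>0 eta) \<in> ?Cod"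
      unfolding tens_def using calculation(1,2) by blast
    ultimately show "\<exists>\<Psi>\<in>?Cod. eq_off (\<Delta> \<inter> V0) (Res z0 \<Phi>) \<Psi>" using gR by blast
  qed
  have lin: "R0_linear ?R0 ?Dom \<Delta> ?Cod (\<Delta> \<inter> V0) (Res z0)"
    using c1 gR unfolding R0_linear_def good_def by blast
  have props: "res_props (card (UNIV :: 'n set)) \<Delta> V0 (Res z0)"
    using gR unfolding good_def by blast
  have uniq: "\<forall>\<Phi>\<in>?Dom. eq_off (\<Delta> \<inter> V0) (res \<Phi>) (Res z0 \<Phi>)"
    if "R0_linear ?R0 ?Dom \<Delta> ?Cod (\<Delta> \<inter> V0) res \<and> res_props (card (UNIV :: 'n set)) \<Delta> V0 res" for res
  proof
    fix \<Phi> assume P: "\<Phi> \<in> ?Dom"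
    have g: "?GD res" using good_from_linear that by blast
    obtain \<psi> \<omega>0 where h: "\<forall>res. ?GD res \<longrightarrow> eq_off (\<Delta> \<inter> V0) (res \<Phi>) (\<lambda>z eta. \<psi> z * \<omega>0 eta)"
      using Dom_res[OF fin V0 P] by blast
    then have "eq_off (\<Delta> \<inter> V0) (res \<Phi>) (\<lambda>z eta. \<psi> z * \<omega>0 eta)" "eq_off (\<Delta> \<inter> V0) (Res z0 \<Phi>) (\<lambda>z eta. \<psi> z * \<omega>0 eta)"
      using g gR by blast+
    then show "eq_off (\<Delta> \<inter> V0) (res \<Phi>) (Res z0 \<Phi>)" unfolding eq_off_def by simp
  qed
  show ?thesis using lin props uniq by blast
qed

end
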